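(* Let $n\ge4$ be even, $p\ge n+1$ an integer, $c_1$ a positive integer, $a_k=pc_k$, $c_{k+1}=p^2c_k$, and let $T$, $I^{(k)}_i$, $b_{k,i}$ and the measures $\lambda_j$ be as in the context. Then for $i\ne j$ and every $k\ge1$, $$\lambda_j(I_i^{(k)})\le\frac{1}{b_{k,i}}.$$
   Context: $\pi$ is the permutation of $\{1,\dots,n\}$ with top row $1,2,\dots,n$ and bottom row $n,3,2,5,4,\dots,n-1,n-2,1$. Right Rauzy induction: step "0" when the rightmost domain (top) interval is longer, "1" when the rightmost image (bottom) interval is longer. For $a,c>0$, $\dot\gamma_{m,a}=1^{n-1-m}0^a10^2$, $\gamma_{a,c}=0\,\dot\gamma_{n-2,a}\cdots\dot\gamma_{2,a}\,1^{c(n-1)}$; its transition matrix $\Theta_{a,c}$ (old lengths $=\Theta_{a,c}\cdot$new lengths) has row $1=(1,c,\dots,c)$, row $n=(1,c+1,\dots,c+1)$, and for $1\le i\le(n-2)/2$: row $2i$ has $0$ in column 1, $2$ in columns $2i,2i+1$, $1$ in the other columns among $2,\dots,n$; row $2i+1$ has $a$ in column $2i$, $a+1$ in column $2i+1$, $0$ elsewhere. $\Theta_k=\Theta_{a_k,c_k}$. $T$ is an IET of $[0,1)$ with permutation $\pi$ whose right Rauzy induction path is $\gamma_{a_1,c_1}\gamma_{a_2,c_2}\cdots$; $I^{(k)}$ is the interval on which the induced map lives after the first $k$ blocks and $I^{(k)}_1,\dots,I^{(k)}_n$ its exchanged subintervals. $b_{k,i}=|\Theta_1\cdots\Theta_ke_i|$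 (sum of entries), the first return time of $I^{(k)}_i$ to $I^{(k)}$. For $v\ge0$, $\overline v=v/|v|$. $\lambda_j$ ($1\le j\le n$) denotes the $T$-invariant Borel probability measure such that for every $k\ge0$, $(\lambda_j(I^{(k)}_t))_t$ is a positive multiple of $\lim_{m\to\infty}\overline{\Theta_{k+1}\cdots\Theta_me_j}$. *)

theory Defs
  imports "HOL-Probability.Probability"
begin

(* Letters (labels of the exchanged intervals) are the naturals 1..n.
   A Rauzy state is (tp row, bottom row, length vector). *)
type_synonym rstate = "nat list \<times> nat list \<times> (nat \<Rightarrow> real)"

fun ins_after :: "nat \<Rightarrow> nat \<Rightarrow> nat list \<Rightarrow> nat list" where
  "ins_after x y [] = []"
| "ins_after x y (z # zs) = (if z = x then z # y # zs else z # ins_after x y zs)"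

definition rauzy_type :: "rstate \<Rightarrow> nat option" where
  "rauzy_type s = (case s of (tp, bt, lam) \<Rightarrow>
      (let al = last tp; be = last bt in
        if lam be < lam al then Some 0 else if lam al < lam be then Some 1 else None))"

definition rauzy_step :: "rstate \<Rightarrow> rstate" where
  "rauzy_step s = (case s of (tp, bt, lam) \<Rightarrow>
      (let al = last tp; be = last bt in
        if lam be < lam al then (tp, ins_after al be (butlast bt), lam(al := lam al - lam be))
        else if lam al < lam be then (ins_after be al (butlast tp), bt, lam(be := lam be - lam al))
        else s))"

definition start :: "nat list \<Rightarrow> (nat \<Rightarrow> real) \<Rightarrow> nat \<Rightarrow> real" where
  "start xs lam a = sum_list (map lam (takeWhile (\<lambda>x. x \<noteq> a) xs))"

definition subint :: "rstate \<Rightarrow> nat \<Rightarrow> real set" where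
  "subint s a = (case s of (tp, bt, lam) \<Rightarrow> {start tp lam a ..< start tp lam a + lam a})"

definition iet :: "nat list \<Rightarrow> nat list \<Rightarrow> (nat \<Rightarrow> real) \<Rightarrow> real \<Rightarrow> real" where
  "iet tp bt lam x = x + (\<Sum>a\<in>set tp. indicator (subint (tp, bt, lam) a) x
                                   * (start bt lam a - start tp lam a))"

definition pi_top :: "nat \<Rightarrow> nat list" where
  "pi_top n = [1..<n+1]"
definition pi_bot :: "nat \<Rightarrow> nat list" where
  "pi_bot n = n # concat (map (\<lambda>i. [2*i+1, 2*i]) [1..<n div 2]) @ [1]"

definition gdot :: "nat \<Rightarrow> nat \<Rightarrow> nat \<Rightarrow> nat list" where
  "gdot n m a = replicate (n - 1 - m) 1 @ replicate a 0 @ [1, 0, 0]"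
definition gamma :: "nat \<Rightarrow> nat \<Rightarrow> nat \<Rightarrow> nat list" where
  "gamma n a c = [0] @ concat (map (\<lambda>i. gdot n (n - 2*i) a) [1..<n div 2]) @ replicate (c * (n - 1)) 1"

definition nsteps :: "nat \<Rightarrow> (nat \<Rightarrow> nat) \<Rightarrow> (nat \<Rightarrow> nat) \<Rightarrow> nat \<Rightarrow> nat" where
  "nsteps n a c k = (\<Sum>l=1..k. length (gamma n (a l) (c l)))"

(* the matrix Theta_{a,c}, entries indexed by 1..n *)
definition Theta :: "nat \<Rightarrow> nat \<Rightarrow> nat \<Rightarrow> nat \<Rightarrow> nat \<Rightarrow> real" where
  "Theta n a c r s =
     (if r = 1 then (if s = 1 then 1 else real c)
      else if r = n then (if s = 1 then 1 else real c + 1)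
      else if even r then (if s = 1 then 0 else if s = r \<or> s = r + 1 then 2 else 1)
      else (if s = r - 1 then real a else if s = r then real a + 1 else 0))"

definition matmul :: "nat \<Rightarrow> (nat \<Rightarrow> nat \<Rightarrow> real) \<Rightarrow> (nat \<Rightarrow> nat \<Rightarrow> real) \<Rightarrow> nat \<Rightarrow> nat \<Rightarrow> real" where
  "matmul n A B r s = (\<Sum>l=1..n. A r l * B l s)"

definition idmat :: "nat \<Rightarrow> nat \<Rightarrow> real" where
  "idmat r s = (if r = s then 1 else 0)"

(* thprod n f k m = f (k+1) * f (k+2) * ... * f m  (identity if m \<le> k) *)
fun thprod :: "nat \<Rightarrow> (nat \<Rightarrow> nat \<Rightarrow> nat \<Rightarrow> real) \<Rightarrow> nat \<Rightarrow> nat \<Rightarrow> nat \<Rightarrow> nat \<Rightarrow> real" where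
  "thprod n f k 0 = idmat"
| "thprod n f k (Suc m) = (if Suc m \<le> k then idmat else matmul n (thprod n f k m) (f (Suc m)))"

end

theory Submission
  imports Defs
begin


lemma start_Nil[simp]: "start [] lam a = 0"
  by (simp add: start_def)

lemma start_Cons[simp]: "start (y # ys) lam a = (if y = a then 0 else lam y + start ys lam a)"
  by (simp add: start_def)

lemma start_nonneg: "(\<And>x. x \<in> set xs \<Longrightarrow> lam x \<ge> 0) \<Longrightarrow> start xs lam a \<ge> 0"
  by (induction xs) auto

lemma start_le_sum: "(\<And>x. x \<in> set xs \<Longrightarrow> lam x \<ge> 0) \<Longrightarrow> a \<in> set xs \<Longrightarrow>
   start xs lam a + lam a \<le> sum_list (map lam xs)"
proof (induction xs)
  case Nil then show ?case by simp
next
  case (Cons y ys)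
  show ?case
  proof (cases "y = a")
    case True
    have "0 \<le> sum_list (map lam ys)" using Cons.prems by (intro sum_list_nonneg) auto
    then show ?thesis using True by simp
  next
    case False
    then show ?thesis using Cons by auto
  qed
qed

lemma start_last: "w \<notin> set C \<Longrightarrow> start (C @ [w]) lam w = sum_list (map lam C)"
  by (induction C) auto

lemma start_cong: "(\<And>x. x \<in> set C \<Longrightarrow> lam' x = lam x) \<Longrightarrow> a \<in> set C \<Longrightarrow>
   start C lam' a = start C lam a"
  by (induction C) auto

lemma start_snoc: "a \<in> set C \<Longrightarrow> start (C @ [w]) lam a = start C lam a"
  by (induction C) auto

lemma start_upd_last:
  assumes "distinct (C @ [w])" "a \<in> set (C @ [w])"
  shows "start (C @ [w]) (lam(w := v)) a = start (C @ [w]) lam a"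
proof (cases "a = w")
  case True then show ?thesis using assms by (simp add: start_last)
next
  case False
  then have "a \<in> set C" using assms by auto
  moreover have "start C (lam(w := v)) a = start C lam a"
    using assms \<open>a \<in> set C\<close> by (intro start_cong) auto
  ultimately show ?thesis by (simp add: start_snoc)
qed

lemma start_ins_other:
  assumes "distinct (B @ [z])" "x \<in> set B" "s \<in> set B"
  shows "start (ins_after x z B) (lam(x := lam x - lam z)) s = start B lam s"
  using assms
proof (induction B)
  case Nil then show ?case by simp
next
  case (Cons y ys)
  show ?case
  proof (cases "y = x")
    case True
    show ?thesis
    proof (cases "s = x")
      case True then show ?thesis using \<open>y = x\<close> by simp
    next
      case False
      have "start ys (lam(x := lam x - lam z)) s = start ys lam s"
        using Cons.prems \<open>y = x\<close> False by (intro start_cong) auto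
      then show ?thesis using Cons.prems \<open>y = x\<close> False by (auto simp: fun_upd_def)
    qed
  next
    case False
    then show ?thesis using Cons by auto
  qed
qed

lemma start_ins_new:
  assumes "distinct (B @ [z])" "x \<in> set B"
  shows "start (ins_after x z B) (lam(x := lam x - lam z)) z = start B lam x + lam x - lam z"
  using assms
proof (induction B)
  case Nil then show ?case by simp
next
  case (Cons y ys)
  show ?case
  proof (cases "y = x")
    case True
    then show ?thesis using Cons.prems by auto
  next
    case False
    then show ?thesis using Cons by auto
  qed
qed

lemma set_ins_after: "x \<in> set B \<Longrightarrow> set (ins_after x z B) = insert z (set B)"
  by (induction B) auto

lemma set_ins_after': "x \<notin> set B \<Longrightarrow> ins_after x z B = B"
  by (induction B) auto

lemma distinct_ins_after: "distinct B \<Longrightarrow> z \<notin> set B \<Longrightarrow> distinct (ins_after x z B)"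
proof (induction B)
  case Nil then show ?case by simp
next
  case (Cons y ys)
  show ?case
  proof (cases "x \<in> set ys")
    case True
    then show ?thesis using Cons by (auto simp: set_ins_after)
  next
    case False
    then show ?thesis using Cons by (auto simp: set_ins_after')
  qed
qed

lemma start_order:
  assumes "distinct xs" "a \<in> set xs" "b \<in> set xs" "a \<noteq> b" "\<And>x. x \<in> set xs \<Longrightarrow> lam x \<ge> 0"
  shows "start xs lam a + lam a \<le> start xs lam b \<or> start xs lam b + lam b \<le> start xs lam a"
  using assms
proof (induction xs)
  case Nil then show ?case by simp
next
  case (Cons y ys)
  have nn: "start ys lam c \<ge> 0" for c using Cons.prems by (intro start_nonneg) auto
  show ?case
  proof (cases "y = a")
    case True then show ?thesis using Cons.prems nn[of b] by auto
  next
    case False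
    show ?thesis
    proof (cases "y = b")
      case True then show ?thesis using Cons.prems nn[of a] False by auto
    next
      case False2: False
      then show ?thesis using Cons False by auto
    qed
  qed
qed

lemma subint_simp: "subint (tp, bt, lam) a = {start tp lam a ..< start tp lam a + lam a}"
  by (simp add: subint_def)

lemma subint_disj:
  assumes "distinct tp" "a \<in> set tp" "b \<in> set tp" "a \<noteq> b" "\<And>x. x \<in> set tp \<Longrightarrow> lam x \<ge> 0"
  shows "subint (tp, bt, lam) a \<inter> subint (tp, bt, lam) b = {}"
proof -
  have "start tp lam a + lam a \<le> start tp lam b \<or> start tp lam b + lam b \<le> start tp lam a"
    by (rule start_order[OF assms])
  then show ?thesis by (auto simp: subint_simp)
qed

lemma iet_on:
  assumes "distinct tp" "s \<in> set tp" "\<And>x. x \<in> set tp \<Longrightarrow> lam x \<ge> 0"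
    and x: "x \<in> subint (tp, bt, lam) s"
  shows "iet tp bt lam x = x + start bt lam s - start tp lam s"
proof -
  have "(\<Sum>a\<in>set tp. indicator (subint (tp, bt, lam) a) x * (start bt lam a - start tp lam a))
      = indicator (subint (tp, bt, lam) s) x * (start bt lam s - start tp lam s)
        + (\<Sum>a\<in>set tp - {s}. indicator (subint (tp, bt, lam) a) x * (start bt lam a - start tp lam a))"
    using assms(2) by (intro sum.remove) auto
  also have "(\<Sum>a\<in>set tp - {s}. indicator (subint (tp, bt, lam) a) x * (start bt lam a - start tp lam a)) = 0"
  proof (intro sum.neutral ballI)
    fix a assume a: "a \<in> set tp - {s}"
    then have "x \<notin> subint (tp, bt, lam) a" using subint_disj[where tp=tp and a=a and b=s and bt=bt and lam=lam] assms x by auto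
    then show "indicator (subint (tp, bt, lam) a) x * (start bt lam a - start tp lam a) = 0" by simp
  qed
  finally show ?thesis using x by (simp add: iet_def)
qed


definition tower :: "(real \<Rightarrow> real) \<Rightarrow> rstate \<Rightarrow> (nat \<Rightarrow> nat) \<Rightarrow> nat set \<Rightarrow> bool" where
"tower T s h L \<longleftrightarrow> (case s of (tp, bt, lam) \<Rightarrow>
   distinct tp \<and> distinct bt \<and> set tp = L \<and> set bt = L \<and> (\<forall>x\<in>L. lam x > 0) \<and> (\<forall>a\<in>L. h a \<ge> 1) \<and>
   (\<forall>a\<in>L. \<forall>q \<le> h a. \<exists>d. \<forall>x\<in>subint s a. (T^^q) x = x + d) \<and>
   (\<forall>a\<in>L. \<forall>x\<in>subint s a. (T^^h a) x = iet tp bt lam x) \<and>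
   (\<forall>a\<in>L. \<forall>a'\<in>L. \<forall>q<h a. \<forall>q'<h a'. \<forall>x\<in>subint s a. \<forall>x'\<in>subint s a'.
      (T^^q) x = (T^^q') x' \<longrightarrow> a = a' \<and> q = q' \<and> x = x'))"

lemma sum_list_eq_set:
  fixes lam :: "nat \<Rightarrow> real"
  assumes "distinct tp" "distinct bt" "set tp = set bt"
  shows "sum_list (map lam tp) = sum_list (map lam bt)"
proof -
  have "sum_list (map lam tp) = sum lam (set tp)" using assms(1) by (rule sum_list_distinct_conv_sum_set)
  also have "\<dots> = sum lam (set bt)" using assms(3) by simp
  also have "\<dots> = sum_list (map lam bt)" using assms(2) by (rule sum_list_distinct_conv_sum_set[symmetric])
  finally show ?thesis .
qed

lemma funpow_split: "k \<le> q \<Longrightarrow> (T^^q) x = (T^^(q - k)) ((T^^k) x)"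
  by (metis comp_apply funpow_add le_add_diff_inverse2)

lemma step0:
  assumes tw: "tower T (tp, bt, lam) h L" and ne: "tp \<noteq> []"
    and lt: "lam (last bt) < lam (last tp)"
  shows "tower T (tp, ins_after (last tp) (last bt) (butlast bt), lam(last tp := lam (last tp) - lam (last bt)))
           (h(last bt := h (last bt) + h (last tp))) L"
proof -
  define al where "al = last tp"
  define be where "be = last bt"
  define bt' where "bt' = ins_after al be (butlast bt)"
  define lam' where "lam' = lam(al := lam al - lam be)"
  define h' where "h' = h(be := h be + h al)"
  define I where "I a = subint (tp, bt, lam) a" for a
  define I' where "I' a = subint (tp, bt', lam') a" for a
  define E where "E x = iet tp bt lam x" for x
  define E' where "E' x = iet tp bt' lam' x" for x
  have dtp: "distinct tp" and dbt: "distinct bt" and stp: "set tp = L" and sbt: "set bt = L"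
    and pos: "\<And>x. x \<in> L \<Longrightarrow> lam x > 0" and hpos: "\<And>a. a \<in> L \<Longrightarrow> h a \<ge> 1"
    and tr: "\<And>a q. a \<in> L \<Longrightarrow> q \<le> h a \<Longrightarrow> \<exists>d. \<forall>x\<in>I a. (T^^q) x = x + d"
    and ret: "\<And>a x. a \<in> L \<Longrightarrow> x \<in> I a \<Longrightarrow> (T^^h a) x = E x"
    and inj: "\<And>a a' q q' x x'. a \<in> L \<Longrightarrow> a' \<in> L \<Longrightarrow> q < h a \<Longrightarrow> q' < h a' \<Longrightarrow> x \<in> I a \<Longrightarrow> x' \<in> I a'
        \<Longrightarrow> (T^^q) x = (T^^q') x' \<Longrightarrow> a = a' \<and> q = q' \<and> x = x'"
    using tw unfolding tower_def I_def E_def by auto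
  have bne: "bt \<noteq> []" using ne stp sbt by auto
  have alL: "al \<in> L" using ne stp al_def by auto
  have beL: "be \<in> L" using bne sbt be_def by auto
  have albe: "al \<noteq> be" using lt al_def be_def by auto
  have ltab: "lam be < lam al" using lt al_def be_def by simp
  obtain A where tpd: "tp = A @ [al]" using ne al_def by (metis append_butlast_last_id)
  obtain B where btd: "bt = B @ [be]" using bne be_def by (metis append_butlast_last_id)
  have bA: "butlast tp = A" using tpd by simp
  have bB: "butlast bt = B" using btd by simp
  have bt'B: "bt' = ins_after al be B" using bB bt'_def by simp
  have dbt2: "distinct (B @ [be])" using dbt btd by simp
  have dtp2: "distinct (A @ [al])" using dtp tpd by simp
  have al_in: "al \<in> set (B)" using alL sbt albe btd by auto
  have be_notin: "be \<notin> set (B)" using dbt2 by simp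
  have set_bb: "set (B) = L - {be}" using btd sbt be_notin by auto
  have dbt': "distinct bt'" unfolding bt'B using dbt2 by (intro distinct_ins_after) auto
  have sbt': "set bt' = L" unfolding bt'B using set_ins_after[OF al_in] set_bb beL by auto
  have pos': "\<And>x. x \<in> L \<Longrightarrow> lam' x > 0" using pos lt unfolding lam'_def al_def be_def by auto
  have nn: "\<And>x. x \<in> set tp \<Longrightarrow> lam x \<ge> 0" using pos stp by (simp add: less_imp_le)
  have nn': "\<And>x. x \<in> set tp \<Longrightarrow> lam' x \<ge> 0" using pos' stp by (simp add: less_imp_le)
  have stp_eq: "start tp lam' a = start tp lam a" if "a \<in> L" for a
  proof -
    have aA: "a \<in> set (A @ [al])" using that stp tpd by simp
    have e: "start (A @ [al]) lam' a = start (A @ [al]) lam a" unfolding lam'_def by (rule start_upd_last[OF dtp2 aA])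
    show ?thesis unfolding tpd by (rule e)
  qed
  have sbt_eq: "start bt' lam' a = start bt lam a" if "a \<in> L" "a \<noteq> be" for a
  proof -
    have "a \<in> set (B)" using that set_bb by auto
    then have "start bt' lam' a = start (B) lam a"
      unfolding bt'B lam'_def using start_ins_other[OF dbt2 al_in] by simp
    also have "\<dots> = start bt lam a" using \<open>a \<in> set (B)\<close> btd by (simp add: start_snoc)
    finally show ?thesis .
  qed
  have sbt_be: "start bt' lam' be = start bt lam al + lam al - lam be"
  proof -
    have "start bt' lam' be = start (B) lam al + lam al - lam be"
      unfolding bt'B lam'_def using start_ins_new[OF dbt2 al_in] by simp
    also have "start (B) lam al = start bt lam al" using al_in btd by (simp add: start_snoc)
    finally show ?thesis .
  qed
  have K: "start tp lam al + lam al = start bt lam be + lam be"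
  proof -
    have "start tp lam al = start (A @ [al]) lam al"
      using tpd by (rule arg_cong[where f="\<lambda>t. start t lam al"])
    also have "\<dots> = sum_list (map lam (A))" using dtp2 by (intro start_last) simp
    finally have 1: "start tp lam al = sum_list (map lam (A))" .
    have "start bt lam be = start (B @ [be]) lam be"
      using btd by (rule arg_cong[where f="\<lambda>t. start t lam be"])
    also have "\<dots> = sum_list (map lam (B))" using dbt2 by (intro start_last) simp
    finally have 2: "start bt lam be = sum_list (map lam (B))" .
    note 1 2
    moreover have "sum_list (map lam tp) = sum_list (map lam bt)" using sum_list_eq_set[OF dtp dbt] stp sbt by simp
    moreover have "sum_list (map lam tp) = sum_list (map lam (A @ [al]))"
      using tpd by (rule arg_cong[where f="\<lambda>t. sum_list (map lam t)"])
    moreover have "sum_list (map lam bt) = sum_list (map lam (B @ [be]))"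
      using btd by (rule arg_cong[where f="\<lambda>t. sum_list (map lam t)"])
    ultimately show ?thesis by simp
  qed
  have I'_eq: "I' a = I a" if "a \<noteq> al" "a \<in> L" for a
    using that stp_eq unfolding I'_def I_def subint_simp lam'_def by simp
  have I'_al: "I' al = {start tp lam al ..< start tp lam al + lam al - lam be}"
    using stp_eq alL unfolding I'_def subint_simp lam'_def by (simp add: add_diff_eq)
  have I'_sub: "I' a \<subseteq> I a" if "a \<in> L" for a
    using I'_eq[OF _ that] I'_al ltab pos[OF beL] unfolding I_def subint_simp by (cases "a = al") auto
  have E_on: "E x = x + start bt lam a - start tp lam a" if "a \<in> L" "x \<in> I a" for a x
    unfolding E_def using iet_on[OF dtp _ nn] that stp unfolding I_def by auto
  have E'_on: "E' x = x + start bt' lam' a - start tp lam a" if "a \<in> L" "x \<in> I' a" for a x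
    unfolding E'_def using iet_on[OF dtp _ nn', where s=a and x=x and bt=bt'] that stp stp_eq unfolding I'_def by auto
  have E_be: "E x \<in> I al \<and> E x \<ge> start tp lam al + lam al - lam be" if "x \<in> I be" for x
    using E_on[OF beL that] that K ltab unfolding I_def subint_simp by auto
  have E_be_eq: "E x = x + (start bt lam be - start tp lam be)" if "x \<in> I be" for x
    using E_on[OF beL that] by simp
  have tr': "\<exists>d. \<forall>x\<in>I' a. (T^^q) x = x + d" if "a \<in> L" "q \<le> h' a" for a q
  proof (cases "a = be \<and> q > h be")
    case True
    then have aa: "a = be" and qq: "q = (q - h be) + h be" "q - h be \<le> h al" using that unfolding h'_def by auto
    obtain d2 where d2: "\<forall>y\<in>I al. (T^^(q - h be)) y = y + d2" using tr[OF alL qq(2)] by blast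
    have "\<forall>x\<in>I' a. (T^^q) x = x + (start bt lam be - start tp lam be + d2)"
    proof
      fix x assume "x \<in> I' a"
      then have x: "x \<in> I be" using aa I'_sub beL by auto
      have "(T^^q) x = (T^^(q - h be)) ((T^^h be) x)" by (rule funpow_split) (use qq(1) in arith)
      also have "\<dots> = (T^^(q - h be)) (E x)" using ret[OF beL x] by simp
      also have "\<dots> = E x + d2" using d2 E_be[OF x] by blast
      finally show "(T^^q) x = x + (start bt lam be - start tp lam be + d2)" using E_be_eq[OF x] by simp
    qed
    then show ?thesis by blast
  next
    case False
    note aL = that(1)
    have "q \<le> h a" using that False unfolding h'_def by (cases "a = be") auto
    then obtain d where "\<forall>x\<in>I a. (T^^q) x = x + d" using tr[OF aL] by blast
    then show ?thesis using I'_sub[OF aL] by blast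
  qed
  have ret': "(T^^h' a) x = E' x" if "a \<in> L" "x \<in> I' a" for a x
  proof (cases "a = be")
    case True
    have x: "x \<in> I be" using True that I'_sub by auto
    have "(T^^h' a) x = (T^^h al) ((T^^h be) x)" using True unfolding h'_def by (simp add: funpow_add add.commute)
    also have "\<dots> = E (E x)" using ret[OF beL x] ret[OF alL] E_be[OF x] by simp
    also have "\<dots> = E x + start bt lam al - start tp lam al" using E_on[OF alL] E_be[OF x] by simp
    also have "\<dots> = E' x" using E_on[OF beL x] E'_on[OF beL] that True sbt_be K stp_eq[OF beL] by simp
    finally show ?thesis .
  next
    case False
    have x: "x \<in> I a" using that I'_sub by auto
    have "(T^^h' a) x = E x" using False ret[OF that(1) x] unfolding h'_def by simp
    also have "\<dots> = E' x" using E_on[OF that(1) x] E'_on[OF that] sbt_eq[OF that(1) False] by simp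
    finally show ?thesis .
  qed
  have hilo: False if "a \<in> L" "a' \<in> L" "a = be" "q \<ge> h be" "q < h' a" "x \<in> I' a"
      "q' < h' a'" "x' \<in> I' a'" "\<not> (a' = be \<and> q' \<ge> h be)" "(T^^q) x = (T^^q') x'" for a q x a' q' x'
  proof -
    have x: "x \<in> I be" using that I'_sub by auto
    have x': "x' \<in> I a'" using that I'_sub by auto
    have q': "q' < h a'" using that unfolding h'_def by (cases "a' = be") auto
    have "(T^^q) x = (T^^(q - h be)) ((T^^h be) x)" by (rule funpow_split) (use that(4) in simp)
    also have "\<dots> = (T^^(q - h be)) (E x)" using ret[OF beL x] by simp
    finally have "(T^^(q - h be)) (E x) = (T^^q') x'" using that by simp
    moreover have "q - h be < h al" using that unfolding h'_def by auto
    ultimately have "al = a' \<and> E x = x'"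
      using inj[where a=al and a'=a' and q="q - h be" and q'=q' and x="E x" and x'=x'] alL that(2) q' x' E_be[OF x] by simp
    then show False using E_be[OF x] that(8) I'_al ltab by auto
  qed
  have inj': "a = a' \<and> q = q' \<and> x = x'" if "a \<in> L" "a' \<in> L" "q < h' a" "q' < h' a'" "x \<in> I' a" "x' \<in> I' a'"
      "(T^^q) x = (T^^q') x'" for a a' q q' x x'
  proof (cases "a = be \<and> q \<ge> h be")
    case True
    show ?thesis
    proof (cases "a' = be \<and> q' \<ge> h be")
      case True2: True
      have x: "x \<in> I be" and x': "x' \<in> I be" using that I'_sub True True2 by auto
      have m1: "(T^^q) x = (T^^(q - h be)) (E x)"
        using funpow_split[of "h be" q T x] True ret[OF beL x] by simp
      have m2: "(T^^q') x' = (T^^(q' - h be)) (E x')"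
        using funpow_split[of "h be" q' T x'] True2 ret[OF beL x'] by simp
      have m3: "q - h be < h al" "q' - h be < h al" using that True True2 unfolding h'_def by auto
      have eq: "(T^^(q - h be)) (E x) = (T^^(q' - h be)) (E x')" using m1 m2 that(7) by metis
      have "q - h be = q' - h be \<and> E x = E x'"
        using inj[OF alL alL m3(1) m3(2) conjunct1[OF E_be[OF x]] conjunct1[OF E_be[OF x']] eq] by blast
      then show ?thesis using True True2 E_be_eq[OF x] E_be_eq[OF x'] by auto
    next
      case False
      have False by (rule hilo[OF that(1,2) conjunct1[OF True] conjunct2[OF True] that(3,5,4,6) False that(7)])
      then show ?thesis by simp
    qed
  next
    case False
    show ?thesis
    proof (cases "a' = be \<and> q' \<ge> h be")
      case True
      have False by (rule hilo[OF that(2,1) conjunct1[OF True] conjunct2[OF True] that(4,6,3,5) False that(7)[symmetric]])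
      then show ?thesis by simp
    next
      case False2: False
      have "q < h a" "q' < h a'" using that False False2 unfolding h'_def by (auto split: if_splits)
      moreover have "x \<in> I a" "x' \<in> I a'" using I'_sub[OF that(1)] I'_sub[OF that(2)] that(5,6) by auto
      ultimately show ?thesis using inj[OF that(1,2)] that(7) by blast
    qed
  qed
  have hpos': "h' a \<ge> 1" if "a \<in> L" for a using hpos[OF that] hpos[OF beL] unfolding h'_def by auto
  show ?thesis
    unfolding tower_def al_def[symmetric] be_def[symmetric] bt'_def[symmetric] lam'_def[symmetric] h'_def[symmetric]
    using dtp dbt' stp sbt' pos' hpos' tr' ret' inj' unfolding I'_def E'_def by auto
qed

lemma step1:
  assumes tw: "tower T (tp, bt, lam) h L" and ne: "tp \<noteq> []"
    and lt: "lam (last tp) < lam (last bt)"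
  shows "tower T (ins_after (last bt) (last tp) (butlast tp), bt, lam(last bt := lam (last bt) - lam (last tp)))
           (h(last tp := h (last tp) + h (last bt))) L"
proof -
  define al where "al = last tp"
  define be where "be = last bt"
  define tp' where "tp' = ins_after be al (butlast tp)"
  define lam' where "lam' = lam(be := lam be - lam al)"
  define h' where "h' = h(al := h al + h be)"
  define I where "I a = subint (tp, bt, lam) a" for a
  define I' where "I' a = subint (tp', bt, lam') a" for a
  define E where "E x = iet tp bt lam x" for x
  define E' where "E' x = iet tp' bt lam' x" for x
  have dtp: "distinct tp" and dbt: "distinct bt" and stp: "set tp = L" and sbt: "set bt = L"
    and pos: "\<And>x. x \<in> L \<Longrightarrow> lam x > 0" and hpos: "\<And>a. a \<in> L \<Longrightarrow> h a \<ge> 1"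
    and tr: "\<And>a q. a \<in> L \<Longrightarrow> q \<le> h a \<Longrightarrow> \<exists>d. \<forall>x\<in>I a. (T^^q) x = x + d"
    and ret: "\<And>a x. a \<in> L \<Longrightarrow> x \<in> I a \<Longrightarrow> (T^^h a) x = E x"
    and inj: "\<And>a a' q q' x x'. a \<in> L \<Longrightarrow> a' \<in> L \<Longrightarrow> q < h a \<Longrightarrow> q' < h a' \<Longrightarrow> x \<in> I a \<Longrightarrow> x' \<in> I a'
        \<Longrightarrow> (T^^q) x = (T^^q') x' \<Longrightarrow> a = a' \<and> q = q' \<and> x = x'"
    using tw unfolding tower_def I_def E_def by auto
  have bne: "bt \<noteq> []" using ne stp sbt by auto
  have alL: "al \<in> L" using ne stp al_def by auto
  have beL: "be \<in> L" using bne sbt be_def by auto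
  have albe: "al \<noteq> be" using lt al_def be_def by auto
  have ltab: "lam al < lam be" using lt al_def be_def by simp
  obtain A where tpd: "tp = A @ [al]" using ne al_def by (metis append_butlast_last_id)
  obtain B where btd: "bt = B @ [be]" using bne be_def by (metis append_butlast_last_id)
  have bA: "butlast tp = A" using tpd by simp
  have bB: "butlast bt = B" using btd by simp
  have tp'A: "tp' = ins_after be al A" using bA tp'_def by simp
  have dbt2: "distinct (B @ [be])" using dbt btd by simp
  have dtp2: "distinct (A @ [al])" using dtp tpd by simp
  have be_in: "be \<in> set (A)" using beL stp albe tpd by auto
  have al_notin: "al \<notin> set (A)" using dtp2 by simp
  have set_bt: "set (A) = L - {al}" using tpd stp al_notin by auto
  have dtp': "distinct tp'" unfolding tp'A using dtp2 by (intro distinct_ins_after) auto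
  have stp': "set tp' = L" unfolding tp'A using set_ins_after[OF be_in] set_bt alL by auto
  have pos': "\<And>x. x \<in> L \<Longrightarrow> lam' x > 0" using pos ltab unfolding lam'_def by auto
  have nn: "\<And>x. x \<in> set tp \<Longrightarrow> lam x \<ge> 0" using pos stp by (simp add: less_imp_le)
  have nn': "\<And>x. x \<in> set tp' \<Longrightarrow> lam' x \<ge> 0" using pos' stp' by (simp add: less_imp_le)
  have sbt_eq: "start bt lam' a = start bt lam a" if "a \<in> L" for a
  proof -
    have aB: "a \<in> set (B @ [be])" using that sbt btd by simp
    have e: "start (B @ [be]) lam' a = start (B @ [be]) lam a" unfolding lam'_def by (rule start_upd_last[OF dbt2 aB])
    show ?thesis unfolding btd by (rule e)
  qed
  have stp_eq: "start tp' lam' a = start tp lam a" if "a \<in> L" "a \<noteq> al" for a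
  proof -
    have "a \<in> set (A)" using that set_bt by auto
    then have "start tp' lam' a = start (A) lam a"
      unfolding tp'A lam'_def using start_ins_other[OF dtp2 be_in] by simp
    also have "\<dots> = start tp lam a" using \<open>a \<in> set (A)\<close> tpd by (simp add: start_snoc)
    finally show ?thesis .
  qed
  have stp_al: "start tp' lam' al = start tp lam be + lam be - lam al"
  proof -
    have "start tp' lam' al = start (A) lam be + lam be - lam al"
      unfolding tp'A lam'_def using start_ins_new[OF dtp2 be_in] by simp
    also have "start (A) lam be = start tp lam be" using be_in tpd by (simp add: start_snoc)
    finally show ?thesis .
  qed
  have K: "start tp lam al + lam al = start bt lam be + lam be"
  proof -
    have "start tp lam al = start (A @ [al]) lam al"
      using tpd by (rule arg_cong[where f="\<lambda>t. start t lam al"])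
    also have "\<dots> = sum_list (map lam (A))" using dtp2 by (intro start_last) simp
    finally have 1: "start tp lam al = sum_list (map lam (A))" .
    have "start bt lam be = start (B @ [be]) lam be"
      using btd by (rule arg_cong[where f="\<lambda>t. start t lam be"])
    also have "\<dots> = sum_list (map lam (B))" using dbt2 by (intro start_last) simp
    finally have 2: "start bt lam be = sum_list (map lam (B))" .
    have "sum_list (map lam tp) = sum_list (map lam bt)" using sum_list_eq_set[OF dtp dbt] stp sbt by simp
    moreover have "sum_list (map lam tp) = sum_list (map lam (A @ [al]))"
      using tpd by (rule arg_cong[where f="\<lambda>t. sum_list (map lam t)"])
    moreover have "sum_list (map lam bt) = sum_list (map lam (B @ [be]))"
      using btd by (rule arg_cong[where f="\<lambda>t. sum_list (map lam t)"])
    ultimately show ?thesis using 1 2 by simp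
  qed
  have I'_eq: "I' a = I a" if "a \<noteq> al" "a \<noteq> be" "a \<in> L" for a
    using that stp_eq unfolding I'_def I_def subint_simp lam'_def by simp
  have I'_be: "I' be = {start tp lam be ..< start tp lam be + lam be - lam al}"
    using stp_eq beL albe unfolding I'_def subint_simp lam'_def by (simp add: add_diff_eq)
  have I'_al: "I' al = {start tp lam be + lam be - lam al ..< start tp lam be + lam be}"
    using stp_al albe unfolding I'_def subint_simp lam'_def by simp
  have I'_sub: "I' a \<subseteq> I a" if "a \<in> L" "a \<noteq> al" for a
    using I'_eq[OF that(2) _ that(1)] I'_be ltab pos[OF alL] unfolding I_def subint_simp by (cases "a = be") auto
  have I'_sub_al: "I' al \<subseteq> I be"
    using I'_al ltab pos[OF alL] unfolding I_def subint_simp by auto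
  have E_on: "E x = x + start bt lam a - start tp lam a" if "a \<in> L" "x \<in> I a" for a x
    unfolding E_def using iet_on[OF dtp _ nn] that stp unfolding I_def by auto
  have E'_on: "E' x = x + start bt lam a - start tp' lam' a" if "a \<in> L" "x \<in> I' a" for a x
    unfolding E'_def using iet_on[OF dtp' _ nn', where s=a and x=x and bt=bt] that stp' sbt_eq unfolding I'_def by auto
  have E_al: "E x \<in> I al" if "x \<in> I' al" for x
    using E_on[OF beL] I'_sub_al that I'_al K ltab unfolding I_def subint_simp by auto
  have E_be_eq: "E x = x + (start bt lam be - start tp lam be)" if "x \<in> I be" for x
    using E_on[OF beL that] by simp
  have tr': "\<exists>d. \<forall>x\<in>I' a. (T^^q) x = x + d" if aL: "a \<in> L" and qh: "q \<le> h' a" for a q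
  proof (cases "a = al \<and> q > h be")
    case True
    then have aa: "a = al" and qq: "q = (q - h be) + h be" "q - h be \<le> h al" using qh unfolding h'_def by auto
    obtain d2 where d2: "\<forall>y\<in>I al. (T^^(q - h be)) y = y + d2" using tr[OF alL qq(2)] by blast
    have "\<forall>x\<in>I' a. (T^^q) x = x + (start bt lam be - start tp lam be + d2)"
    proof
      fix x assume xa: "x \<in> I' a"
      then have x: "x \<in> I be" using aa I'_sub_al by auto
      have "(T^^q) x = (T^^(q - h be)) ((T^^h be) x)" by (rule funpow_split) (use qq(1) in arith)
      also have "\<dots> = (T^^(q - h be)) (E x)" using ret[OF beL x] by simp
      also have "\<dots> = E x + d2" using d2 E_al xa aa by blast
      finally show "(T^^q) x = x + (start bt lam be - start tp lam be + d2)" using E_be_eq[OF x] by simp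
    qed
    then show ?thesis by blast
  next
    case False
    show ?thesis
    proof (cases "a = al")
      case True
      then have "q \<le> h be" using False by auto
      then obtain d where "\<forall>x\<in>I be. (T^^q) x = x + d" using tr[OF beL] by blast
      then show ?thesis using I'_sub_al True by blast
    next
      case False2: False
      have "q \<le> h a" using qh False2 unfolding h'_def by simp
      then obtain d where "\<forall>x\<in>I a. (T^^q) x = x + d" using tr[OF aL] by blast
      then show ?thesis using I'_sub[OF aL False2] by blast
    qed
  qed
  have ret': "(T^^h' a) x = E' x" if aL: "a \<in> L" and xa: "x \<in> I' a" for a x
  proof (cases "a = al")
    case True
    have x: "x \<in> I be" using True xa I'_sub_al by auto
    have "(T^^h' a) x = (T^^h al) ((T^^h be) x)" using True unfolding h'_def by (simp add: funpow_add add.commute)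
    also have "\<dots> = E (E x)" using ret[OF beL x] ret[OF alL] E_al xa True by simp
    also have "\<dots> = E x + start bt lam al - start tp lam al" using E_on[OF alL] E_al xa True by simp
    also have "\<dots> = E' x" using E_on[OF beL x] E'_on[OF alL] xa True stp_al K by simp
    finally show ?thesis .
  next
    case False
    have x: "x \<in> I a" using xa I'_sub[OF aL False] by auto
    have "(T^^h' a) x = E x" using False ret[OF aL x] unfolding h'_def by simp
    also have "\<dots> = E' x" using E_on[OF aL x] E'_on[OF aL xa] stp_eq[OF aL False] by simp
    finally show ?thesis .
  qed
  have hi_old: "(T^^q) x = (T^^(q - h be)) (E x) \<and> q - h be < h al \<and> E x \<in> I al"
    if "q \<ge> h be" "q < h' al" "x \<in> I' al" for q x
  proof -
    have x: "x \<in> I be" using that I'_sub_al by auto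
    have "(T^^q) x = (T^^(q - h be)) ((T^^h be) x)" by (rule funpow_split) (use that(1) in simp)
    then show ?thesis using ret[OF beL x] that E_al unfolding h'_def by auto
  qed
  have hi_other: False if "a \<in> L" "a' \<in> L" "a = al" "q \<ge> h be" "q < h' a" "x \<in> I' a"
      "q' < h' a'" "x' \<in> I' a'" "\<not> (a' = al \<and> q' \<ge> h be)" "(T^^q) x = (T^^q') x'" for a q x a' q' x'
  proof -
    have o: "(T^^q) x = (T^^(q - h be)) (E x)" "q - h be < h al" "E x \<in> I al" using hi_old[of q x] that by auto
    show False
    proof (cases "a' = al")
      case True
      then have "q' < h be" "x' \<in> I be" using that I'_sub_al by auto
      then show False using inj[where a=al and a'=be and q="q - h be" and q'=q' and x="E x" and x'=x'] alL beL o that(10) albe by simp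
    next
      case False
      then have "q' < h a'" "x' \<in> I a'" using that I'_sub[OF that(2) False] unfolding h'_def by auto
      then show False using inj[where a=al and a'=a' and q="q - h be" and q'=q' and x="E x" and x'=x'] alL that(2) o that(10) False by simp
    qed
  qed
  have inj': "a = a' \<and> q = q' \<and> x = x'" if "a \<in> L" "a' \<in> L" "q < h' a" "q' < h' a'" "x \<in> I' a" "x' \<in> I' a'"
      "(T^^q) x = (T^^q') x'" for a a' q q' x x'
  proof (cases "a = al \<and> q \<ge> h be")
    case True
    show ?thesis
    proof (cases "a' = al \<and> q' \<ge> h be")
      case True2: True
      have o: "(T^^q) x = (T^^(q - h be)) (E x)" "q - h be < h al" "E x \<in> I al" using hi_old[of q x] that True by auto
      have o': "(T^^q') x' = (T^^(q' - h be)) (E x')" "q' - h be < h al" "E x' \<in> I al" using hi_old[of q' x'] that True2 by auto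
      have eq: "(T^^(q - h be)) (E x) = (T^^(q' - h be)) (E x')" using o(1) o'(1) that(7) by metis
      have "q - h be = q' - h be \<and> E x = E x'" using inj[OF alL alL o(2) o'(2) o(3) o'(3) eq] by blast
      moreover have "x \<in> I be" "x' \<in> I be" using that True True2 I'_sub_al by auto
      ultimately show ?thesis using True True2 E_be_eq by auto
    next
      case False
      have False by (rule hi_other[of a a' q x q' x']) (use that False True in auto)
      then show ?thesis by simp
    qed
  next
    case False
    show ?thesis
    proof (cases "a' = al \<and> q' \<ge> h be")
      case True
      have False by (rule hi_other[of a' a q' x' q x]) (use that False True in auto)
      then show ?thesis by simp
    next
      case False2: False
      \<comment> \<open>map to old triples: (al,q,x) with q < h be goes to (be,q,x)\<close>
      define oa where "oa = (if a = al then be else a)"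
      define oa' where "oa' = (if a' = al then be else a')"
      have oa: "oa \<in> L" "q < h oa" "x \<in> I oa" using that False I'_sub I'_sub_al beL unfolding oa_def h'_def by (auto split: if_splits)
      have oa': "oa' \<in> L" "q' < h oa'" "x' \<in> I oa'" using that False2 I'_sub I'_sub_al beL unfolding oa'_def h'_def by (auto split: if_splits)
      have e: "oa = oa' \<and> q = q' \<and> x = x'" using inj[OF oa(1) oa'(1) oa(2) oa'(2) oa(3) oa'(3)] that(7) by blast
      have "a = a'"
      proof (rule ccontr)
        assume ne: "a \<noteq> a'"
        then have "(a = al \<and> a' = be) \<or> (a = be \<and> a' = al)" using e unfolding oa_def oa'_def by (auto split: if_splits)
        then show False using e that(5,6) I'_al I'_be by auto
      qed
      then show ?thesis using e by simp
    qed
  qed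
  have hpos': "h' a \<ge> 1" if "a \<in> L" for a using hpos[OF that] hpos[OF beL] unfolding h'_def by auto
  show ?thesis
    unfolding tower_def al_def[symmetric] be_def[symmetric] tp'_def[symmetric] lam'_def[symmetric] h'_def[symmetric]
    using dtp' dbt stp' sbt pos' hpos' tr' ret' inj' unfolding I'_def E'_def by auto
qed


lemma funpow_meas:
  assumes "T \<in> M \<rightarrow>\<^sub>M M"
  shows "(T^^q) \<in> M \<rightarrow>\<^sub>M M"
proof (induction q)
  case 0 then show ?case by (simp add: measurable_id[unfolded id_def[symmetric]])
next
  case (Suc q)
  have "(\<lambda>x. T ((T^^q) x)) \<in> M \<rightarrow>\<^sub>M M" using measurable_compose[OF Suc assms] .
  then show ?case by (simp add: comp_def)
qed

lemma funpow_pres: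
  assumes T: "T \<in> M \<rightarrow>\<^sub>M M" and inv: "distr M M T = M" and A: "A \<in> sets M"
  shows "measure M ((T^^q) -` A \<inter> space M) = measure M A"
  using A
proof (induction q arbitrary: A)
  case 0 then show ?case by (simp add: Int_absorb2 sets.sets_into_space)
next
  case (Suc q)
  have sp: "\<And>x. x \<in> space M \<Longrightarrow> T x \<in> space M" using T by (meson measurable_space)
  have B: "(T^^q) -` A \<inter> space M \<in> sets M" using funpow_meas[OF T] Suc.prems by (rule measurable_sets)
  have "(T^^Suc q) -` A \<inter> space M = T -` ((T^^q) -` A \<inter> space M) \<inter> space M"
    using sp by (auto simp del: funpow.simps(2) simp add: funpow_Suc_right)
  then have "measure M ((T^^Suc q) -` A \<inter> space M) = measure M (T -` ((T^^q) -` A \<inter> space M) \<inter> space M)" by simp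
  also have "\<dots> = measure (distr M M T) ((T^^q) -` A \<inter> space M)"
    using measure_distr[OF T B] by simp
  also have "\<dots> = measure M ((T^^q) -` A \<inter> space M)" using inv by simp
  also have "\<dots> = measure M A" using Suc.IH[OF Suc.prems] .
  finally show ?case .
qed

lemma tower_bound:
  fixes M :: "real measure"
  assumes P: "prob_space M" and S: "sets M = sets (restrict_space borel {0..<(1::real)})"
    and T: "T \<in> M \<rightarrow>\<^sub>M M" and inv: "distr M M T = M"
    and tw: "tower T (tp, bt, lam) h L" and fin: "finite L"
    and sub: "\<And>a. a \<in> L \<Longrightarrow> subint (tp, bt, lam) a \<subseteq> {0..<1}"
  shows "(\<Sum>a\<in>L. real (h a) * measure M (subint (tp, bt, lam) a)) \<le> 1"
proof -
  define I where "I a = subint (tp, bt, lam) a" for a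
  have sp: "space M = {0..<1}" using sets_eq_imp_space_eq[OF S] by (simp add: space_restrict_space)
  have inM: "A \<in> sets M" if "A \<in> sets borel" "A \<subseteq> {0..<1}" for A
    using that S by (simp add: sets_restrict_space_iff)
  have tr: "\<And>a q. a \<in> L \<Longrightarrow> q \<le> h a \<Longrightarrow> \<exists>d. \<forall>x\<in>I a. (T^^q) x = x + d"
    and inj: "\<And>a a' q q' x x'. a \<in> L \<Longrightarrow> a' \<in> L \<Longrightarrow> q < h a \<Longrightarrow> q' < h a' \<Longrightarrow> x \<in> I a \<Longrightarrow> x' \<in> I a'
        \<Longrightarrow> (T^^q) x = (T^^q') x' \<Longrightarrow> a = a' \<and> q = q' \<and> x = x'"
    using tw unfolding tower_def I_def by auto
  have Iint: "I a = {start tp lam a ..< start tp lam a + lam a}" for a unfolding I_def subint_simp ..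
  have Tsp: "(T^^q) x \<in> {0..<1}" if "x \<in> {0..<1}" for q x
    using measurable_space[OF funpow_meas[OF T], of x q] that sp by simp
  define K where "K = Sigma L (\<lambda>a. {..<h a})"
  define Lev where "Lev p = (T^^(snd p)) ` I (fst p)" for p
  have finK: "finite K" unfolding K_def using fin by auto
  have LevM: "Lev p \<in> sets M" if pK: "p \<in> K" for p
  proof -
    obtain a q where p: "p = (a, q)" "a \<in> L" "q < h a" using pK unfolding K_def by (cases p) auto
    obtain d where d: "\<forall>x\<in>I a. (T^^q) x = x + d" using tr[OF p(2)] p(3) by fastforce
    have "Lev p = (\<lambda>x. x + d) ` I a" unfolding Lev_def p using d by (auto simp: image_def)
    also have "\<dots> = {start tp lam a + d ..< start tp lam a + lam a + d}"
      unfolding Iint by (auto simp: image_def intro: bexI[where x="_ - d"])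
    finally have e: "Lev p = {start tp lam a + d ..< start tp lam a + lam a + d}" .
    have "Lev p \<subseteq> {0..<1}" unfolding Lev_def p using Tsp sub[OF p(2)] unfolding I_def by auto
    then show ?thesis using inM e by auto
  qed
  have IM: "I a \<in> sets M" if "a \<in> L" for a
    using inM[of "I a"] sub[OF that] unfolding I_def by (simp add: subint_simp)
  have lower: "measure M (I a) \<le> measure M (Lev (a, q))" if "a \<in> L" "q < h a" for a q
  proof -
    have LM: "Lev (a, q) \<in> sets M" using LevM that unfolding K_def by auto
    have "I a \<subseteq> (T^^q) -` Lev (a, q) \<inter> space M" unfolding Lev_def using sub[OF that(1)] sp unfolding I_def by auto
    then have "measure M (I a) \<le> measure M ((T^^q) -` Lev (a, q) \<inter> space M)"
      using prob_space.finite_measure[OF P] LM funpow_meas[OF T]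
      by (intro finite_measure.finite_measure_mono) (auto intro: measurable_sets)
    also have "\<dots> = measure M (Lev (a, q))" using funpow_pres[OF T inv LM] .
    finally show ?thesis .
  qed
  have disj: "disjoint_family_on Lev K"
    unfolding disjoint_family_on_def
  proof (intro ballI impI)
    fix p p' assume pK: "p \<in> K" "p' \<in> K" "p \<noteq> p'"
    obtain a q where p: "p = (a, q)" "a \<in> L" "q < h a" using pK unfolding K_def by (cases p) auto
    obtain a' q' where p': "p' = (a', q')" "a' \<in> L" "q' < h a'" using pK unfolding K_def by (cases p') auto
    show "Lev p \<inter> Lev p' = {}"
    proof (rule ccontr)
      assume "Lev p \<inter> Lev p' \<noteq> {}"
      then obtain x x' where "x \<in> I a" "x' \<in> I a'" "(T^^q) x = (T^^q') x'" unfolding Lev_def p p' by auto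
      then have "a = a' \<and> q = q'" using inj[OF p(2) p'(2) p(3) p'(3)] by blast
      then show False using pK p p' by simp
    qed
  qed
  have "(\<Sum>a\<in>L. real (h a) * measure M (I a)) = (\<Sum>a\<in>L. \<Sum>q<h a. measure M (I a))" by simp
  also have "\<dots> \<le> (\<Sum>a\<in>L. \<Sum>q<h a. measure M (Lev (a, q)))"
    using lower by (intro sum_mono) auto
  also have "\<dots> = (\<Sum>p\<in>K. measure M (Lev p))" unfolding K_def using fin by (subst sum.Sigma) auto
  also have "\<dots> = measure M (\<Union>p\<in>K. Lev p)"
  proof -
    have "Lev ` K \<subseteq> sets M" using LevM by blast
    from finite_measure.finite_measure_finite_Union[OF prob_space.finite_measure[OF P] finK this disj]
    show ?thesis by simp
  qed
  also have "\<dots> \<le> 1" using prob_space.prob_le_1[OF P] .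
  finally show ?thesis unfolding I_def .
qed


definition hstep :: "rstate \<Rightarrow> (nat \<Rightarrow> nat) \<Rightarrow> (nat \<Rightarrow> nat)" where
"hstep s h = (case s of (tp, bt, lam) \<Rightarrow>
   if lam (last bt) < lam (last tp) then h(last bt := h (last bt) + h (last tp))
   else if lam (last tp) < lam (last bt) then h(last tp := h (last tp) + h (last bt)) else h)"

lemma step_tower:
  assumes tw: "tower T s h L" and ne: "L \<noteq> {}" and ty: "rauzy_type s \<noteq> None"
  shows "tower T (rauzy_step s) (hstep s h) L"
proof -
  obtain tp bt lam where s: "s = (tp, bt, lam)" by (cases s) auto
  have "set tp = L" using tw unfolding s tower_def by auto
  then have tne: "tp \<noteq> []" using ne by auto
  have "lam (last bt) < lam (last tp) \<or> lam (last tp) < lam (last bt)"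
    using ty unfolding s rauzy_type_def by (auto simp: Let_def split: if_splits)
  then show ?thesis
  proof
    assume lt: "lam (last bt) < lam (last tp)"
    show ?thesis using step0[OF tw[unfolded s] tne lt] lt unfolding s rauzy_step_def hstep_def by (simp add: Let_def)
  next
    assume lt: "lam (last tp) < lam (last bt)"
    show ?thesis using step1[OF tw[unfolded s] tne lt] lt unfolding s rauzy_step_def hstep_def by (simp add: Let_def)
  qed
qed

lemma step_lam_le:
  assumes "lam (last tp) > 0" "lam (last bt) > 0"
  shows "snd (snd (rauzy_step (tp, bt, lam))) a \<le> lam a"
  using assms unfolding rauzy_step_def by (auto simp: Let_def)

lemma base_tower:
  assumes dtp: "distinct tp" and dbt: "distinct bt" and stp: "set tp = L" and sbt: "set bt = L"
    and pos: "\<And>a. a \<in> L \<Longrightarrow> lam a > 0"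
  shows "tower (iet tp bt lam) (tp, bt, lam) (\<lambda>_. 1) L"
proof -
  have nn: "\<And>x. x \<in> set tp \<Longrightarrow> lam x \<ge> 0" using pos stp by (simp add: less_imp_le)
  have tr: "\<exists>d. \<forall>x\<in>subint (tp, bt, lam) a. (iet tp bt lam ^^ q) x = x + d" if "a \<in> L" "q \<le> 1" for a q
  proof (cases "q = 0")
    case True then show ?thesis by simp
  next
    case False
    then have "q = 1" using that by simp
    then show ?thesis using iet_on[OF dtp _ nn] that stp by (intro exI[of _ "start bt lam a - start tp lam a"]) auto
  qed
  have inj: "a = a' \<and> x = x'" if "a \<in> L" "a' \<in> L" "x \<in> subint (tp, bt, lam) a" "x' \<in> subint (tp, bt, lam) a'" "x = x'"
    for a a' x x'
    using subint_disj[OF dtp, of a a' lam bt] that stp nn by auto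
  show ?thesis unfolding tower_def using dtp dbt stp sbt pos tr inj by auto
qed

definition pairs :: "nat \<Rightarrow> nat list" where
  "pairs k = concat (map (\<lambda>i. [2*i+1, 2*i]) [1..<k])"

lemma pairs_Suc: "pairs (Suc k) = (if k = 0 then [] else pairs k @ [2*k+1, 2*k])"
  unfolding pairs_def by (cases k) auto

lemma pairs_set: "set (pairs k) = {2..<2*k}"
proof (induction k)
  case 0 then show ?case by (simp add: pairs_def)
next
  case (Suc k) then show ?case by (auto simp: pairs_Suc)
qed

lemma pairs_distinct: "distinct (pairs k)"
proof (induction k)
  case 0 then show ?case by (simp add: pairs_def)
next
  case (Suc k) then show ?case by (auto simp: pairs_Suc pairs_set)
qed

lemma pi_bot_eq: "pi_bot n = n # pairs (n div 2) @ [1]"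
  unfolding pi_bot_def pairs_def by simp

lemma pi_facts:
  assumes "n \<ge> 2" "even n"
  shows "distinct (pi_top n)" "set (pi_top n) = {1..n}" "distinct (pi_bot n)" "set (pi_bot n) = {1..n}"
proof -
  show "distinct (pi_top n)" "set (pi_top n) = {1..n}" unfolding pi_top_def by auto
  have n2: "2 * (n div 2) = n" using assms by simp
  show "distinct (pi_bot n)" unfolding pi_bot_eq using pairs_distinct pairs_set n2 assms by auto
  show "set (pi_bot n) = {1..n}" unfolding pi_bot_eq using pairs_set n2 assms by auto
qed


definition cstep :: "nat \<Rightarrow> nat list \<times> nat list \<times> (nat \<Rightarrow> nat) \<Rightarrow> nat list \<times> nat list \<times> (nat \<Rightarrow> nat)" where
"cstep t s = (case s of (tp, bt, h) \<Rightarrow>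
   if t = 0 then (tp, ins_after (last tp) (last bt) (butlast bt), h(last bt := h (last bt) + h (last tp)))
   else (ins_after (last bt) (last tp) (butlast tp), bt, h(last tp := h (last tp) + h (last bt))))"

definition crun :: "nat list \<Rightarrow> nat list \<times> nat list \<times> (nat \<Rightarrow> nat) \<Rightarrow> nat list \<times> nat list \<times> (nat \<Rightarrow> nat)" where
"crun ts s = fold cstep ts s"

lemma crun_append: "crun (xs @ ys) s = crun ys (crun xs s)"
  unfolding crun_def by simp

lemma crun_Nil[simp]: "crun [] s = s" unfolding crun_def by simp

lemma crun_Cons: "crun (t # ts) s = crun ts (cstep t s)" unfolding crun_def by simp

lemma crun_snoc: "crun (ts @ [t]) s = cstep t (crun ts s)" unfolding crun_def by simp

lemma ins_after_mid: "x \<notin> set A \<Longrightarrow> ins_after x z (A @ x # R) = A @ x # z # R"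
  by (induction A) auto

definition tpk :: "nat \<Rightarrow> nat \<Rightarrow> nat \<Rightarrow> nat list" where
  "tpk n m k = [1..<m+1] @ [n-k+1..<n+1] @ [m+1..<n-k+1]"

lemma tpk0: "m \<le> n \<Longrightarrow> tpk n m 0 = [1..<n+1]"
proof -
  assume "m \<le> n"
  have "[1..<(m+1)+(n-m)] = [1..<m+1] @ [m+1..<(m+1)+(n-m)]" by (rule upt_add_eq_append) simp
  moreover have "(m+1)+(n-m) = n+1" using \<open>m \<le> n\<close> by simp
  ultimately have "[1..<n+1] = [1..<m+1] @ [m+1..<n+1]" by metis
  then show ?thesis unfolding tpk_def by simp
qed

lemma S1:
  assumes m: "1 \<le> m" and k: "k < n - m" and lb: "last bt = m"
  shows "cstep 1 (tpk n m k, bt, h) = (tpk n m (Suc k), bt, h(n-k := h (n-k) + h m))"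
proof -
  have e1: "[m+1..<n-k+1] = [m+1..<n-k] @ [n-k]" using k by simp
  have e2: "[1..<m+1] = [1..<m] @ [m]" using m by simp
  have t: "tpk n m k = ([1..<m] @ m # [n-k+1..<n+1] @ [m+1..<n-k]) @ [n-k]"
    unfolding tpk_def e1 e2 by simp
  have "ins_after m (n-k) ([1..<m] @ m # [n-k+1..<n+1] @ [m+1..<n-k]) = [1..<m] @ m # (n-k) # [n-k+1..<n+1] @ [m+1..<n-k]"
    by (rule ins_after_mid) simp
  also have "\<dots> = tpk n m (Suc k)"
  proof -
    have "n - Suc k + 1 = n - k" using k by simp
    moreover have "[n-k..<n+1] = (n-k) # [n-k+1..<n+1]" using upt_conv_Cons[of "n-k" "n+1"] k by simp
    ultimately show ?thesis unfolding tpk_def e2 by (simp del: upt_Suc)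
  qed
  finally have ia: "ins_after m (n-k) ([1..<m] @ m # [n-k+1..<n+1] @ [m+1..<n-k]) = tpk n m (Suc k)" .
  have l1: "last (tpk n m k) = n-k" and l2: "butlast (tpk n m k) = [1..<m] @ m # [n-k+1..<n+1] @ [m+1..<n-k]"
    unfolding t by (rule last_snoc, rule butlast_snoc)
  show ?thesis unfolding cstep_def using lb ia l1 l2 by simp
qed

lemma G1:
  assumes m: "1 \<le> m" "m < n" and lb: "last bt = m"
  shows "k \<le> n - m \<Longrightarrow> crun (replicate k 1) (tpk n m 0, bt, h) = (tpk n m k, bt, \<lambda>s. if n - k < s \<and> s \<le> n then h s + h m else h s)"
proof (induction k)
  case 0 then show ?case by (simp add: fun_eq_iff)
next
  case (Suc k)
  have r: "replicate (Suc k) (1::nat) = replicate k 1 @ [1]" by (simp add: replicate_append_same)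
  have kk: "k < n - m" using Suc.prems by simp
  have "crun (replicate (Suc k) 1) (tpk n m 0, bt, h) = cstep 1 (tpk n m k, bt, \<lambda>s. if n - k < s \<and> s \<le> n then h s + h m else h s)"
    unfolding r crun_snoc using Suc.IH kk by simp
  also have "\<dots> = (tpk n m (Suc k), bt, \<lambda>s. if n - Suc k < s \<and> s \<le> n then h s + h m else h s)"
    unfolding S1[OF m(1) kk lb] using kk by (auto simp: fun_eq_iff)
  finally show ?case .
qed

lemma G2:
  assumes z: "Suc m \<notin> set Z" and lt: "last tp = Suc m"
  shows "crun (replicate k 0) (tp, Z @ [Suc m, m], h) = (tp, Z @ [Suc m, m], h(m := h m + k * h (Suc m)))"
proof (induction k)
  case 0 then show ?case by simp
next
  case (Suc k)
  have r: "replicate (Suc k) (0::nat) = replicate k 0 @ [0]" by (simp add: replicate_append_same)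
  have bl: "butlast (Z @ [Suc m, m]) = Z @ [Suc m]" by (induction Z) auto
  have ia: "ins_after (Suc m) m (Z @ [Suc m]) = Z @ [Suc m, m]" using ins_after_mid[OF z, of m "[]"] by simp
  show ?case unfolding r crun_snoc Suc.IH unfolding cstep_def using lt bl ia by (auto simp: fun_eq_iff)
qed


definition gh :: "nat \<Rightarrow> nat \<Rightarrow> nat \<Rightarrow> (nat \<Rightarrow> nat) \<Rightarrow> (nat \<Rightarrow> nat)" where
"gh n m a h = (let h1 = (\<lambda>s. if Suc m < s \<and> s \<le> n then h s + h m else h s);
     h2 = h1(m := h1 m + a * h1 (Suc m));
     h3 = h2(Suc m := h2 (Suc m) + h2 m);
     h4 = h3(m := h3 m + h3 n)
   in h4(Suc m := h4 (Suc m) + h4 n))"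

lemma G:
  assumes m: "1 \<le> m" "Suc m < n" and Y: "Suc m \<notin> set Y"
  shows "crun (gdot n m a) ([1..<n+1], n # Y @ [Suc m, m], h) = ([1..<n+1], n # Suc m # m # Y, gh n m a h)"
proof -
  define bt0 where "bt0 = n # Y @ [Suc m, m]"
  define h1 where "h1 = (\<lambda>s. if Suc m < s \<and> s \<le> n then h s + h m else h s)"
  define h2 where "h2 = h1(m := h1 m + a * h1 (Suc m))"
  define h3 where "h3 = h2(Suc m := h2 (Suc m) + h2 m)"
  define h4 where "h4 = h3(m := h3 m + h3 n)"
  have lb: "last bt0 = m" unfolding bt0_def by simp
  have k1: "n - (n - 1 - m) = Suc m" using m by simp
  have s1: "crun (replicate (n-1-m) 1) ([1..<n+1], bt0, h) = (tpk n m (n-1-m), bt0, h1)"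
  proof -
    have "crun (replicate (n-1-m) 1) (tpk n m 0, bt0, h) = (tpk n m (n-1-m), bt0, \<lambda>s. if n - (n-1-m) < s \<and> s \<le> n then h s + h m else h s)"
      by (rule G1[OF m(1) _ lb]) (use m in simp_all)
    moreover have "tpk n m 0 = [1..<n+1]" using tpk0[of m n] m by simp
    ultimately show ?thesis unfolding h1_def k1 by simp
  qed
  have tl: "tpk n m (n-1-m) = ([1..<m+1] @ [m+2..<n+1]) @ [Suc m]"
    unfolding tpk_def using m k1 by simp
  have s2: "crun (replicate a 0) (tpk n m (n-1-m), bt0, h1) = (tpk n m (n-1-m), bt0, h2)"
    unfolding bt0_def h2_def using G2[where m=m and Z="n # Y" and tp="tpk n m (n-1-m)" and k=a and h=h1] Y m tl by simp
  have s3: "cstep 1 (tpk n m (n-1-m), bt0, h2) = ([1..<n+1], bt0, h3)"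
  proof -
    have "cstep 1 (tpk n m (n-1-m), bt0, h2) = (tpk n m (Suc (n-1-m)), bt0, h2(n - (n-1-m) := h2 (n - (n-1-m)) + h2 m))"
      using S1[OF m(1) _ lb, where k="n-1-m" and h=h2] m by simp
    moreover have "tpk n m (Suc (n-1-m)) = [1..<n+1]"
    proof -
      have "Suc (n-1-m) = n - m" using m by simp
      then have "tpk n m (Suc (n-1-m)) = tpk n m 0" using m unfolding tpk_def by simp
      then show ?thesis using tpk0[of m n] m by simp
    qed
    ultimately show ?thesis unfolding h3_def k1 by simp
  qed
  have s4: "cstep 0 ([1..<n+1], bt0, h3) = ([1..<n+1], n # m # Y @ [Suc m], h4)"
  proof -
    have "last [1..<n+1] = n" using m by simp
    moreover have "butlast bt0 = n # Y @ [Suc m]" unfolding bt0_def by (induction Y) auto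
    ultimately show ?thesis unfolding cstep_def h4_def using lb by simp
  qed
  have s5: "cstep 0 ([1..<n+1], n # m # Y @ [Suc m], h4) = ([1..<n+1], n # Suc m # m # Y, gh n m a h)"
  proof -
    have "last [1..<n+1] = n" using m by simp
    moreover have "butlast (n # m # Y @ [Suc m]) = n # m # Y" by simp
    moreover have "last (n # m # Y @ [Suc m]) = Suc m" by simp
    ultimately show ?thesis unfolding cstep_def gh_def h4_def h3_def h2_def h1_def Let_def by simp
  qed
  have "gdot n m a = replicate (n-1-m) 1 @ replicate a 0 @ [1] @ [0] @ [0]" unfolding gdot_def by simp
  then have "crun (gdot n m a) ([1..<n+1], bt0, h) = cstep 0 (cstep 0 (cstep 1 (crun (replicate a 0) (crun (replicate (n-1-m) 1) ([1..<n+1], bt0, h)))))"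
    by (simp add: crun_append crun_Cons)
  also have "\<dots> = ([1..<n+1], n # Suc m # m # Y, gh n m a h)" unfolding s1 s2 s3 s4 s5 ..
  finally show ?thesis unfolding bt0_def .
qed


definition dpairs :: "nat \<Rightarrow> nat \<Rightarrow> nat list" where
  "dpairs lo hi = concat (map (\<lambda>l. [2*l+1, 2*l]) [lo..<hi])"

lemma dpairs_Suc_hi: "lo \<le> hi \<Longrightarrow> dpairs lo (Suc hi) = dpairs lo hi @ [2*hi+1, 2*hi]"
  unfolding dpairs_def by simp

lemma dpairs_Suc_lo: "lo < hi \<Longrightarrow> dpairs lo hi = [2*lo+1, 2*lo] @ dpairs (Suc lo) hi"
  unfolding dpairs_def by (simp add: upt_conv_Cons)

lemma dpairs_empty: "hi \<le> lo \<Longrightarrow> dpairs lo hi = []"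
  unfolding dpairs_def by simp

lemma set_dpairs: "set (dpairs lo hi) = {2*lo..<2*hi}"
proof (induction hi)
  case 0 then show ?case by (simp add: dpairs_def)
next
  case (Suc hi)
  show ?case
  proof (cases "lo \<le> hi")
    case True then show ?thesis using Suc by (auto simp: dpairs_Suc_hi)
  next
    case False then show ?thesis by (simp add: dpairs_empty)
  qed
qed

lemma pairs_dpairs: "pairs k = dpairs 1 k" unfolding pairs_def dpairs_def ..

definition Bst :: "nat \<Rightarrow> nat \<Rightarrow> nat list" where
  "Bst n j = n # dpairs j (n div 2) @ [1] @ dpairs 1 j"

definition Hc :: "nat \<Rightarrow> nat \<Rightarrow> (nat \<Rightarrow> nat) \<Rightarrow> nat \<Rightarrow> nat \<Rightarrow> nat" where
  "Hc n a H j s = (if s = 1 then H 1 + H n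
     else if s = n then H n + (\<Sum>l\<in>{j..<n div 2}. H (2*l))
     else if 2*j \<le> s \<and> s < n then (if even s then H s + a * H (Suc s) else H (s-1) + (a+1) * H s)
         + H n + (\<Sum>l\<in>{j..<n div 2}. H (2*l))
     else H s)"

lemma gh_val:
  assumes "1 \<le> m" "Suc m < n"
  shows "gh n m a h s = (if s = Suc m then h (Suc m) + (h m + a * h (Suc m)) + (h n + h m)
                 else if s = m then h m + a * h (Suc m) + (h n + h m)
                 else if Suc m < s \<and> s \<le> n then h s + h m else h s)"
  using assms unfolding gh_def Let_def by auto

lemma Hc_step:
  assumes n: "even n" and j: "1 \<le> j" "j < n div 2"
  shows "gh n (2*j) a (Hc n a H (Suc j)) = Hc n a H j"
proof
  fix s
  define m where "m = 2*j"
  define S where "S = (\<Sum>l\<in>{Suc j..<n div 2}. H (2*l))"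
  have n2: "n = 2 * (n div 2)" using n by simp
  have m1: "1 \<le> m" "Suc m < n" using j n2 unfolding m_def by linarith+
  have Sj: "(\<Sum>l\<in>{j..<n div 2}. H (2*l)) = H m + S" unfolding S_def m_def using j by (simp add: sum.atLeast_Suc_lessThan)
  have v1: "Hc n a H (Suc j) m = H m" using m1 unfolding Hc_def m_def by auto
  have v2: "Hc n a H (Suc j) (Suc m) = H (Suc m)" using m1 n unfolding Hc_def m_def by auto
  have v3: "Hc n a H (Suc j) n = H n + S" using m1 unfolding Hc_def S_def by auto
  have ev: "even m" unfolding m_def by simp
  show "gh n (2*j) a (Hc n a H (Suc j)) s = Hc n a H j s"
    unfolding m_def[symmetric] gh_val[OF m1] v1 v2 v3
    using m1 ev n Sj unfolding Hc_def S_def m_def by (auto simp: algebra_simps)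
qed

lemma groups:
  assumes n: "even n" "4 \<le> n"
  shows "t \<le> n div 2 - 1 \<Longrightarrow> crun (concat (map (\<lambda>i. gdot n (n - 2*i) a) [1..<Suc t]))
      ([1..<n+1], Bst n (n div 2), Hc n a H (n div 2)) = ([1..<n+1], Bst n (n div 2 - t), Hc n a H (n div 2 - t))"
proof (induction t)
  case 0 then show ?case by simp
next
  case (Suc t)
  define j where "j = n div 2 - Suc t"
  have n2: "n = 2 * (n div 2)" using n by simp
  have j1: "1 \<le> j" "j < n div 2" using Suc.prems n unfolding j_def by auto
  have e: "n div 2 - t = Suc j" using Suc.prems unfolding j_def by simp
  have mm: "n - 2 * Suc t = 2 * j" unfolding j_def using n2 by simp
  have bst: "Bst n (Suc j) = n # (dpairs (Suc j) (n div 2) @ [1] @ dpairs 1 j) @ [Suc (2*j), 2*j]"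
    unfolding Bst_def using dpairs_Suc_hi[of 1 j] j1 by simp
  have bst2: "n # Suc (2*j) # 2*j # (dpairs (Suc j) (n div 2) @ [1] @ dpairs 1 j) = Bst n j"
    unfolding Bst_def using dpairs_Suc_lo[of j "n div 2"] j1 by simp
  have notin: "Suc (2*j) \<notin> set (dpairs (Suc j) (n div 2) @ [1] @ dpairs 1 j)"
    using j1 by (auto simp: set_dpairs)
  have ml: "1 \<le> 2*j" "Suc (2*j) < n" using j1 n2 by linarith+
  have "[1..<Suc (Suc t)] = [1..<Suc t] @ [Suc t]" by simp
  then have "crun (concat (map (\<lambda>i. gdot n (n - 2*i) a) [1..<Suc (Suc t)]))
      ([1..<n+1], Bst n (n div 2), Hc n a H (n div 2))
      = crun (gdot n (2*j) a) ([1..<n+1], Bst n (Suc j), Hc n a H (Suc j))"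
    using Suc.IH Suc.prems e mm by (simp add: crun_append)
  also have "\<dots> = ([1..<n+1], Bst n j, Hc n a H j)"
    unfolding bst G[OF ml notin] bst2 Hc_step[OF n(1) j1] ..
  finally show ?case unfolding j_def .
qed

lemma rounds:
  assumes "2 \<le> n" "last bt = 1"
  shows "crun (replicate (c * (n-1)) 1) ([1..<n+1], bt, h) = ([1..<n+1], bt, \<lambda>s. if 1 < s \<and> s \<le> n then h s + c * h 1 else h s)"
proof (induction c arbitrary: h)
  case 0 then show ?case by (simp add: fun_eq_iff)
next
  case (Suc c)
  have t0: "tpk n 1 0 = [1..<n+1]" using tpk0[of 1 n] assms by simp
  have t1: "tpk n 1 (n-1) = [1..<n+1]" unfolding tpk_def using upt_conv_Cons[of "Suc 0" n] assms by simp
  have one: "crun (replicate (n-1) 1) ([1..<n+1], bt, h) = ([1..<n+1], bt, \<lambda>s. if 1 < s \<and> s \<le> n then h s + h 1 else h s)"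
    using G1[OF _ _ assms(2), where k="n-1" and h=h and n=n] t0 t1 assms by simp
  have r: "replicate (Suc c * (n-1)) (1::nat) = replicate (n-1) 1 @ replicate (c * (n-1)) 1" by (simp add: replicate_add)
  have "crun (replicate (Suc c * (n-1)) 1) ([1..<n+1], bt, h)
     = crun (replicate (c * (n-1)) 1) ([1..<n+1], bt, \<lambda>s. if 1 < s \<and> s \<le> n then h s + h 1 else h s)"
    unfolding r crun_append one ..
  also have "\<dots> = ([1..<n+1], bt, \<lambda>s. if 1 < s \<and> s \<le> n then h s + Suc c * h 1 else h s)"
    unfolding Suc.IH by (auto simp: fun_eq_iff)
  finally show ?case .
qed

definition BH :: "nat \<Rightarrow> nat \<Rightarrow> nat \<Rightarrow> (nat \<Rightarrow> nat) \<Rightarrow> nat \<Rightarrow> nat" where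
  "BH n a c H s = (if 1 < s \<and> s \<le> n then Hc n a H 1 s + c * Hc n a H 1 1 else Hc n a H 1 s)"

lemma block:
  assumes n: "even n" "4 \<le> n"
  shows "crun (gamma n a c) (pi_top n, pi_bot n, H) = (pi_top n, pi_bot n, BH n a c H)"
proof -
  have n2: "n = 2 * (n div 2)" using n by simp
  have init: "cstep 0 ([1..<n+1], pi_bot n, H) = ([1..<n+1], Bst n (n div 2), Hc n a H (n div 2))"
  proof -
    have "last [1..<n+1] = n" using n by simp
    moreover have "pi_bot n = (n # pairs (n div 2)) @ [1]" by (simp add: pi_bot_eq)
    moreover have "Bst n (n div 2) = n # 1 # pairs (n div 2)" unfolding Bst_def pairs_dpairs by (simp add: dpairs_empty)
    moreover have "H(1 := H 1 + H n) = Hc n a H (n div 2)" using n unfolding Hc_def by (auto simp: fun_eq_iff)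
    ultimately show ?thesis unfolding cstep_def by simp
  qed
  have ng: "[1..<n div 2] = [1..<Suc (n div 2 - 1)]" using n by simp
  have gr: "crun (concat (map (\<lambda>i. gdot n (n - 2*i) a) [1..<n div 2])) ([1..<n+1], Bst n (n div 2), Hc n a H (n div 2))
      = ([1..<n+1], pi_bot n, Hc n a H 1)"
  proof -
    have "n div 2 - (n div 2 - 1) = 1" using n by simp
    moreover have "Bst n 1 = pi_bot n" unfolding Bst_def pi_bot_eq pairs_dpairs by (simp add: dpairs_empty)
    ultimately show ?thesis unfolding ng using groups[OF n, of "n div 2 - 1" a H] by simp
  qed
  have lb: "last (pi_bot n) = 1" by (simp add: pi_bot_eq)
  have "gamma n a c = [0] @ concat (map (\<lambda>i. gdot n (n - 2*i) a) [1..<n div 2]) @ replicate (c * (n - 1)) 1"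
    unfolding gamma_def ..
  then have "crun (gamma n a c) (pi_top n, pi_bot n, H) = crun (replicate (c * (n - 1)) 1) ([1..<n+1], pi_bot n, Hc n a H 1)"
    unfolding pi_top_def using init gr by (simp add: crun_append crun_Cons)
  also have "\<dots> = ([1..<n+1], pi_bot n, \<lambda>s. if 1 < s \<and> s \<le> n then Hc n a H 1 s + c * Hc n a H 1 1 else Hc n a H 1 s)"
    by (rule rounds[OF _ lb]) (use n in simp)
  also have "\<dots> = (pi_top n, pi_bot n, BH n a c H)"
    unfolding pi_top_def by (simp add: BH_def[abs_def])
  finally show ?thesis .
qed


lemma Theta_mid:
  assumes "2 \<le> r" "r \<le> n - 1" "2 \<le> s" "4 \<le> n"
  shows "real (H r) * Theta n a c r s = (if even r then real (H r) else 0)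
     + (if r = s then (if even s then real (H s) else (real a + 1) * real (H s)) else 0)
     + (if r = s - 1 then (if odd s then real (H r) else 0) else 0)
     + (if r = s + 1 then (if even s then real a * real (H r) else 0) else 0)"
proof -
  have r1: "r \<noteq> 1" "r \<noteq> n" "s \<noteq> 1" using assms by auto
  show ?thesis
  proof (cases "even r")
    case True
    then have "odd (r+1)" by simp
    moreover have "r \<noteq> s + 1 \<or> odd s" using True by auto
    ultimately show ?thesis using True r1 unfolding Theta_def
      by (cases "r = s"; cases "r = s - 1"; simp add: algebra_simps)
  next
    case False
    then have "r \<noteq> s - 1 \<or> even s" using assms by (cases "s = r + 1") auto
    then show ?thesis using False r1 unfolding Theta_def
      by (cases "r = s"; cases "r = s + 1"; auto simp: algebra_simps)
  qed
qed


lemma even_sum: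
  fixes n :: nat and H :: "nat \<Rightarrow> nat"
  assumes "even n" "2 \<le> n"
  shows "(\<Sum>r\<in>{2..n-1}. if even r then real (H r) else 0) = (\<Sum>l\<in>{1..<n div 2}. real (H (2*l)))"
proof -
  have img: "(\<lambda>l. 2*l) ` {1..<n div 2} = {r\<in>{2..n-1}. even r}"
  proof
    show "(\<lambda>l. 2*l) ` {1..<n div 2} \<subseteq> {r\<in>{2..n-1}. even r}" using assms by auto
    show "{r\<in>{2..n-1}. even r} \<subseteq> (\<lambda>l. 2*l) ` {1..<n div 2}"
    proof
      fix r assume r: "r \<in> {r\<in>{2..n-1}. even r}"
      then obtain l where l: "r = 2*l" by (auto elim: evenE)
      then have "l \<in> {1..<n div 2}" using r assms by auto
      then show "r \<in> (\<lambda>l. 2*l) ` {1..<n div 2}" using l by blast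
    qed
  qed
  have "(\<Sum>r\<in>{2..n-1}. if even r then real (H r) else 0) = (\<Sum>r\<in>{r\<in>{2..n-1}. even r}. real (H r))"
    by (rule sum.inter_filter[symmetric]) simp
  also have "\<dots> = (\<Sum>r\<in>(\<lambda>l. 2*l) ` {1..<n div 2}. real (H r))" unfolding img ..
  also have "\<dots> = (\<Sum>l\<in>{1..<n div 2}. real (H (2*l)))" by (subst sum.reindex) (auto simp: inj_on_def)
  finally show ?thesis .
qed

lemma mid_sum:
  fixes n :: nat and H :: "nat \<Rightarrow> nat"
  assumes n: "even n" "4 \<le> n" and s: "2 \<le> s"
  shows "(\<Sum>r\<in>{2..n-1}. real (H r) * Theta n a c r s) =
     (\<Sum>l\<in>{1..<n div 2}. real (H (2*l)))
     + (if s \<in> {2..n-1} then (if even s then real (H s) else (real a + 1) * real (H s)) else 0)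
     + (if s - 1 \<in> {2..n-1} then (if odd s then real (H (s-1)) else 0) else 0)
     + (if s + 1 \<in> {2..n-1} then (if even s then real a * real (H (s+1)) else 0) else 0)"
proof -
  have n2: "(2::nat) \<le> n" using n by simp
  have "(\<Sum>r\<in>{2..n-1}. real (H r) * Theta n a c r s) =
       (\<Sum>r\<in>{2..n-1}. (if even r then real (H r) else 0)
     + (if r = s then (if even s then real (H s) else (real a + 1) * real (H s)) else 0)
     + (if r = s - 1 then (if odd s then real (H r) else 0) else 0)
     + (if r = s + 1 then (if even s then real a * real (H r) else 0) else 0))"
    by (rule sum.cong) (use Theta_mid[OF _ _ s n(2)] in auto)
  also have "\<dots> = (\<Sum>r\<in>{2..n-1}. (if even r then real (H r) else 0))
     + (\<Sum>r\<in>{2..n-1}. (if r = s then (if even s then real (H s) else (real a + 1) * real (H s)) else 0))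
     + (\<Sum>r\<in>{2..n-1}. (if r = s - 1 then (if odd s then real (H r) else 0) else 0))
     + (\<Sum>r\<in>{2..n-1}. (if r = s + 1 then (if even s then real a * real (H r) else 0) else 0))"
    by (simp only: sum.distrib)
  also have "\<dots> = (\<Sum>l\<in>{1..<n div 2}. real (H (2*l)))
     + (if s \<in> {2..n-1} then (if even s then real (H s) else (real a + 1) * real (H s)) else 0)
     + (if s - 1 \<in> {2..n-1} then (if odd s then real (H (s-1)) else 0) else 0)
     + (if s + 1 \<in> {2..n-1} then (if even s then real a * real (H (s+1)) else 0) else 0)"
    unfolding even_sum[OF n(1) n2] by (simp only: sum.delta finite_atLeastAtMost)
  finally show ?thesis .
qed


lemma BH_Theta:
  fixes n :: nat and H :: "nat \<Rightarrow> nat"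
  assumes n: "even n" "4 \<le> n" and s: "s \<in> {1..n}"
  shows "real (BH n a c H s) = (\<Sum>r=1..n. real (H r) * Theta n a c r s)"
proof -
  define S where "S = (\<Sum>l\<in>{1..<n div 2}. real (H (2*l)))"
  have Sn: "real (\<Sum>l\<in>{1..<n div 2}. H (2*l)) = S" unfolding S_def by simp
  have split: "{1..n} = insert 1 (insert n {2..n-1})" using n by auto
  have sumsplit: "(\<Sum>r=1..n. f r) = f 1 + f n + (\<Sum>r\<in>{2..n-1}. f r)" for f :: "nat \<Rightarrow> real"
  proof -
    have "1 \<notin> insert n {2..n-1}" "n \<notin> {2..n-1}" using n by auto
    then show ?thesis unfolding split by (simp add: add.assoc)
  qed
  have T1: "Theta n a c 1 s = (if s = 1 then 1 else real c)" unfolding Theta_def by simp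
  have Tn: "Theta n a c n s = (if s = 1 then 1 else real c + 1)" using n unfolding Theta_def by simp
  show ?thesis
  proof (cases "s = 1")
    case True
    have z: "Theta n a c r s = 0" if "r \<in> {2..n-1}" for r
      using that True unfolding Theta_def by (cases "r = 2") auto
    have mid0: "(\<Sum>r\<in>{2..n-1}. real (H r) * Theta n a c r s) = 0"
      using z by simp
    have "BH n a c H s = H 1 + H n" using True unfolding BH_def Hc_def by simp
    then show ?thesis unfolding sumsplit mid0 T1 Tn using True by simp
  next
    case False
    then have s2: "2 \<le> s" "s \<le> n" using s by auto
    have Hc: "Hc n a H 1 s = (if s = n then H n + (\<Sum>l\<in>{1..<n div 2}. H (2*l))
       else (if even s then H s + a * H (Suc s) else H (s-1) + (a+1) * H s) + H n + (\<Sum>l\<in>{1..<n div 2}. H (2*l)))"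
      using s2 False unfolding Hc_def by auto
    have Hc1: "Hc n a H 1 1 = H 1 + H n" unfolding Hc_def by simp
    have BHs: "BH n a c H s = Hc n a H 1 s + c * (H 1 + H n)" using s2 unfolding BH_def Hc1 by simp
    note ms = mid_sum[OF n s2(1), of H a c]
    show ?thesis
    proof (cases "s = n")
      case True
      have "real (BH n a c H s) = real (H n) + S + real c * (real (H 1) + real (H n))"
        unfolding BHs Hc using True Sn by simp
      moreover have "s \<notin> {2..n-1}" "s + 1 \<notin> {2..n-1}" using True n by auto
      ultimately show ?thesis unfolding sumsplit ms T1 Tn S_def[symmetric] using True n False
        by (simp add: algebra_simps)
    next
      case sn: False
      show ?thesis
      proof (cases "even s")
        case True
        have "real (BH n a c H s) = real (H s) + real a * real (H (s+1)) + real (H n) + S + real c * (real (H 1) + real (H n))"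
          unfolding BHs Hc using True sn Sn by simp
        moreover have "s \<in> {2..n-1}" using s2 sn by auto
        moreover have "s + 1 \<in> {2..n-1}"
        proof -
          have "s \<noteq> n - 1" using True n(1) n(2) by (metis dvd_diff_nat even_add odd_one le_add_diff_inverse2 le_trans one_le_numeral)
          then show ?thesis using s2 sn by auto
        qed
        ultimately show ?thesis unfolding sumsplit ms T1 Tn S_def[symmetric] using True False
          by (simp add: algebra_simps)
      next
        case odd: False
        have "real (BH n a c H s) = real (H (s-1)) + (real a + 1) * real (H s) + real (H n) + S + real c * (real (H 1) + real (H n))"
          unfolding BHs Hc using odd sn Sn by (simp add: algebra_simps)
        moreover have "s \<in> {2..n-1}" using s2 sn by auto
        moreover have "s - 1 \<in> {2..n-1}"
        proof -
          have "s \<noteq> 2" using odd by auto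
          then show ?thesis using s2 sn by auto
        qed
        ultimately show ?thesis unfolding sumsplit ms T1 Tn S_def[symmetric] using odd False
          by (simp add: algebra_simps)
      qed
    qed
  qed
qed


fun hseq :: "rstate \<Rightarrow> nat \<Rightarrow> (nat \<Rightarrow> nat)" where
  "hseq s0 0 = (\<lambda>_. 1)"
| "hseq s0 (Suc N) = hstep ((rauzy_step ^^ N) s0) (hseq s0 N)"

lemma nsteps_Suc: "nsteps n a c (Suc k) = nsteps n a c k + length (gamma n (a (Suc k)) (c (Suc k)))"
  unfolding nsteps_def by simp

lemma nsteps_0: "nsteps n a c 0 = 0" unfolding nsteps_def by simp

lemma gamma_len: "0 < length (gamma n a c)" unfolding gamma_def by simp

lemma decomp: "\<exists>k m. N = nsteps n a c k + m \<and> m < length (gamma n (a (Suc k)) (c (Suc k)))"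
proof (induction N)
  case 0 then show ?case using gamma_len nsteps_0 by (metis add_0)
next
  case (Suc N)
  then obtain k m where km: "N = nsteps n a c k + m" "m < length (gamma n (a (Suc k)) (c (Suc k)))" by blast
  show ?case
  proof (cases "Suc m < length (gamma n (a (Suc k)) (c (Suc k)))")
    case True then show ?thesis using km by (intro exI[of _ k] exI[of _ "Suc m"]) simp
  next
    case False
    then have "Suc N = nsteps n a c (Suc k) + 0" using km nsteps_Suc by simp
    then show ?thesis using gamma_len by blast
  qed
qed

lemma step_c:
  assumes "rauzy_type s = Some t"
  shows "(fst (rauzy_step s), fst (snd (rauzy_step s)), hstep s h) = cstep t (fst s, fst (snd s), h)"
proof -
  obtain tp bt lam where s: "s = (tp, bt, lam)" by (cases s) auto
  show ?thesis using assms unfolding s rauzy_type_def rauzy_step_def hstep_def cstep_def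
    by (auto simp: Let_def split: if_splits)
qed

lemma b_Suc:
  "(\<Sum>r=1..n. thprod n (\<lambda>l. Theta n (a l) (c l)) 0 (Suc k) r s)
   = (\<Sum>l=1..n. (\<Sum>r=1..n. thprod n (\<lambda>l. Theta n (a l) (c l)) 0 k r l) * Theta n (a (Suc k)) (c (Suc k)) l s)"
proof -
  have "(\<Sum>r=1..n. thprod n (\<lambda>l. Theta n (a l) (c l)) 0 (Suc k) r s)
      = (\<Sum>r=1..n. \<Sum>l=1..n. thprod n (\<lambda>l. Theta n (a l) (c l)) 0 k r l * Theta n (a (Suc k)) (c (Suc k)) l s)"
    by (simp add: matmul_def)
  also have "\<dots> = (\<Sum>l=1..n. \<Sum>r=1..n. thprod n (\<lambda>l. Theta n (a l) (c l)) 0 k r l * Theta n (a (Suc k)) (c (Suc k)) l s)"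
    by (rule sum.swap)
  also have "\<dots> = (\<Sum>l=1..n. (\<Sum>r=1..n. thprod n (\<lambda>l. Theta n (a l) (c l)) 0 k r l) * Theta n (a (Suc k)) (c (Suc k)) l s)"
    by (simp add: sum_distrib_right)
  finally show ?thesis .
qed

lemma b_0: "s \<in> {1..n} \<Longrightarrow> (\<Sum>r=1..n. thprod n f 0 0 r s) = 1"
  by (simp add: idmat_def)


theorem mainTheorem14:
  fixes n p :: nat
    and a c :: "nat \<Rightarrow> nat"
    and lam :: "nat \<Rightarrow> real"
    and j :: nat
    and M :: "real measure"
  assumes n_ge: "n \<ge> 4" and n_even: "even n"
    and p_ge: "p \<ge> n + 1"
    and c1_pos: "c 1 > 0"
    and a_def: "\<And>k. k \<ge> 1 \<Longrightarrow> a k = p * c k"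
    and c_rec: "\<And>k. k \<ge> 1 \<Longrightarrow> c (Suc k) = p^2 * c k"
    and lam_pos: "\<And>t. t \<in> {1..n} \<Longrightarrow> lam t > 0"
    and lam_sum: "(\<Sum>t=1..n. lam t) = 1"
    and path: "\<And>k m. m < length (gamma n (a (Suc k)) (c (Suc k))) \<Longrightarrow>
        rauzy_type ((rauzy_step ^^ (nsteps n a c k + m)) (pi_top n, pi_bot n, lam))
          = Some (gamma n (a (Suc k)) (c (Suc k)) ! m)"
    and j_range: "j \<in> {1..n}"
    and M_sets: "sets M = sets (restrict_space borel {0..<(1::real)})"
    and M_prob: "prob_space M"
    and M_meas: "iet (pi_top n) (pi_bot n) lam \<in> M \<rightarrow>\<^sub>M M"
    and M_inv: "distr M M (iet (pi_top n) (pi_bot n) lam) = M"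
    and M_lim: "\<And>k. \<exists>r>0. \<forall>t\<in>{1..n}.
        (\<lambda>m. r * (thprod n (\<lambda>l. Theta n (a l) (c l)) k m t j
                  / (\<Sum>s=1..n. thprod n (\<lambda>l. Theta n (a l) (c l)) k m s j)))
        \<longlonglongrightarrow> measure M (subint ((rauzy_step ^^ nsteps n a c k) (pi_top n, pi_bot n, lam)) t)"
  shows "\<forall>k\<ge>1. \<forall>i\<in>{1..n}. i \<noteq> j \<longrightarrow>
      measure M (subint ((rauzy_step ^^ nsteps n a c k) (pi_top n, pi_bot n, lam)) i)
        \<le> 1 / (\<Sum>r=1..n. thprod n (\<lambda>l. Theta n (a l) (c l)) 0 k r i)"
proof -
  define s0 where "s0 = (pi_top n, pi_bot n, lam)"
  define st where "st N = (rauzy_step ^^ N) s0" for N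
  define T where "T = iet (pi_top n) (pi_bot n) lam"
  define L where "L = {1..n::nat}"
  define B where "B k i = (\<Sum>r=1..n. thprod n (\<lambda>l. Theta n (a l) (c l)) 0 k r i)" for k i
  have n2: "2 \<le> n" using n_ge by simp
  note pf = pi_facts[OF n2 n_even]
  have Lne: "L \<noteq> {}" using n_ge unfolding L_def by auto
  have finL: "finite L" unfolding L_def by simp
  have ty: "rauzy_type (st N) \<noteq> None" for N
  proof -
    obtain k m where km: "N = nsteps n a c k + m" "m < length (gamma n (a (Suc k)) (c (Suc k)))"
      using decomp by blast
    show ?thesis using path[OF km(2)] km(1) unfolding st_def s0_def by simp
  qed
  have stS: "st (Suc N) = rauzy_step (st N)" for N unfolding st_def by simp
  have tw: "tower T (st N) (hseq s0 N) L" for N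
  proof (induction N)
    case 0
    have "tower T (pi_top n, pi_bot n, lam) (\<lambda>_. 1) L"
      unfolding T_def by (rule base_tower[OF pf(1) pf(3) pf(2)[folded L_def] pf(4)[folded L_def]]) (use lam_pos in \<open>auto simp: L_def\<close>)
    then show ?case unfolding st_def s0_def by simp
  next
    case (Suc N)
    show ?case unfolding stS hseq.simps st_def[symmetric] by (rule step_tower[OF Suc Lne ty])
  qed
  have lamle: "\<forall>x\<in>L. snd (snd (st N)) x \<le> lam x" for N
  proof (induction N)
    case 0 then show ?case unfolding st_def s0_def by simp
  next
    case (Suc N)
    obtain tp bt lm where e: "st N = (tp, bt, lm)" by (cases "st N") auto
    have t: "tower T (tp, bt, lm) (hseq s0 N) L" using tw[of N] e by simp
    then have sl: "set tp = L" "set bt = L" "\<forall>x\<in>L. lm x > 0" unfolding tower_def by auto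
    then have ne: "tp \<noteq> []" "bt \<noteq> []" using Lne by auto
    have "last tp \<in> L" "last bt \<in> L" using last_in_set[OF ne(1)] last_in_set[OF ne(2)] sl by auto
    then have "lm (last tp) > 0" "lm (last bt) > 0" using sl by auto
    then have "snd (snd (rauzy_step (tp, bt, lm))) x \<le> lm x" for x by (rule step_lam_le)
    then show ?case using Suc e unfolding stS by (auto intro: order.trans)
  qed
  have sub: "subint (st N) x \<subseteq> {0..<1}" if "x \<in> L" for N x
  proof -
    obtain tp bt lm where e: "st N = (tp, bt, lm)" by (cases "st N") auto
    have t: "tower T (tp, bt, lm) (hseq s0 N) L" using tw[of N] e by simp
    then have d: "distinct tp" "set tp = L" "\<forall>x\<in>L. lm x > 0" unfolding tower_def by auto
    have nn: "\<And>y. y \<in> set tp \<Longrightarrow> lm y \<ge> 0" using d by (simp add: less_imp_le)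
    have "start tp lm x + lm x \<le> sum_list (map lm tp)" using start_le_sum[OF nn] that d by auto
    also have "\<dots> = sum lm L" using d by (simp add: sum_list_distinct_conv_sum_set)
    also have "\<dots> \<le> sum lam L" using lamle[of N] e by (intro sum_mono) auto
    also have "\<dots> = 1" using lam_sum unfolding L_def .
    finally have "start tp lm x + lm x \<le> 1" .
    moreover have "start tp lm x \<ge> 0" using start_nonneg[OF nn] .
    ultimately show ?thesis unfolding e subint_simp by auto
  qed
  have hk: "fst (st (nsteps n a c k)) = pi_top n \<and> fst (snd (st (nsteps n a c k))) = pi_bot n
      \<and> (\<forall>i\<in>L. real (hseq s0 (nsteps n a c k) i) = B k i)" for k
  proof (induction k)
    case 0
    show ?case unfolding nsteps_0 st_def s0_def B_def L_def using b_0 by simp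
  next
    case (Suc k)
    define g where "g = gamma n (a (Suc k)) (c (Suc k))"
    define N0 where "N0 = nsteps n a c k"
    have cr: "m \<le> length g \<Longrightarrow> (fst (st (N0+m)), fst (snd (st (N0+m))), hseq s0 (N0+m))
        = crun (take m g) (fst (st N0), fst (snd (st N0)), hseq s0 N0)" for m
    proof (induction m)
      case 0 then show ?case by simp
    next
      case (Suc m)
      have ml: "m < length g" using Suc.prems by simp
      have tk: "take (Suc m) g = take m g @ [g ! m]" using ml by (simp add: take_Suc_conv_app_nth)
      have rt: "rauzy_type (st (N0 + m)) = Some (g ! m)" using path[of m k] ml unfolding g_def N0_def st_def s0_def by simp
      have "(fst (st (N0 + Suc m)), fst (snd (st (N0 + Suc m))), hseq s0 (N0 + Suc m))
          = (fst (rauzy_step (st (N0+m))), fst (snd (rauzy_step (st (N0+m)))), hstep (st (N0+m)) (hseq s0 (N0+m)))"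
        unfolding st_def by simp
      also have "\<dots> = cstep (g ! m) (fst (st (N0+m)), fst (snd (st (N0+m))), hseq s0 (N0+m))"
        by (rule step_c[OF rt])
      also have "\<dots> = crun (take (Suc m) g) (fst (st N0), fst (snd (st N0)), hseq s0 N0)"
        unfolding tk crun_snoc using Suc.IH ml by simp
      finally show ?case .
    qed
    have IH1: "fst (st N0) = pi_top n" "fst (snd (st N0)) = pi_bot n" using Suc.IH unfolding N0_def by auto
    have IH2: "\<forall>i\<in>L. real (hseq s0 N0 i) = B k i" using Suc.IH unfolding N0_def by auto
    have ns: "nsteps n a c (Suc k) = N0 + length g" unfolding N0_def g_def by (rule nsteps_Suc)
    have "(fst (st (nsteps n a c (Suc k))), fst (snd (st (nsteps n a c (Suc k)))), hseq s0 (nsteps n a c (Suc k)))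
        = crun g (pi_top n, pi_bot n, hseq s0 N0)"
      using cr[of "length g"] IH1 unfolding ns by simp
    also have "\<dots> = (pi_top n, pi_bot n, BH n (a (Suc k)) (c (Suc k)) (hseq s0 N0))"
      unfolding g_def by (rule block[OF n_even n_ge])
    finally have e: "(fst (st (nsteps n a c (Suc k))), fst (snd (st (nsteps n a c (Suc k)))), hseq s0 (nsteps n a c (Suc k)))
        = (pi_top n, pi_bot n, BH n (a (Suc k)) (c (Suc k)) (hseq s0 N0))" .
    have "real (BH n (a (Suc k)) (c (Suc k)) (hseq s0 N0) i) = B (Suc k) i" if "i \<in> L" for i
    proof -
      have "real (BH n (a (Suc k)) (c (Suc k)) (hseq s0 N0) i)
          = (\<Sum>r=1..n. real (hseq s0 N0 r) * Theta n (a (Suc k)) (c (Suc k)) r i)"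
        using BH_Theta[OF n_even n_ge] that unfolding L_def by blast
      also have "\<dots> = (\<Sum>r=1..n. B k r * Theta n (a (Suc k)) (c (Suc k)) r i)"
        using IH2 unfolding L_def by (intro sum.cong) auto
      also have "\<dots> = B (Suc k) i" unfolding B_def by (rule b_Suc[symmetric])
      finally show ?thesis .
    qed
    then show ?case using e by auto
  qed
  show ?thesis
  proof (intro allI impI ballI)
    fix k i :: nat assume k: "k \<ge> 1" and i: "i \<in> {1..n}" and ij: "i \<noteq> j"
    define N where "N = nsteps n a c k"
    obtain tp bt lm where e: "st N = (tp, bt, lm)" by (cases "st N") auto
    have t: "tower T (tp, bt, lm) (hseq s0 N) L" using tw[of N] e by simp
    have iL: "i \<in> L" using i unfolding L_def .
    have bnd: "(\<Sum>x\<in>L. real (hseq s0 N x) * measure M (subint (tp, bt, lm) x)) \<le> 1"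
      by (rule tower_bound[OF M_prob M_sets M_meas[folded T_def] M_inv[folded T_def] t finL])
         (use sub[of _ N] e in auto)
    have "real (hseq s0 N i) * measure M (subint (tp, bt, lm) i) \<le> (\<Sum>x\<in>L. real (hseq s0 N x) * measure M (subint (tp, bt, lm) x))"
      by (rule member_le_sum) (use iL finL in auto)
    then have p: "real (hseq s0 N i) * measure M (subint (tp, bt, lm) i) \<le> 1" using bnd by linarith
    have h1: "hseq s0 N i \<ge> 1" using t iL unfolding tower_def by auto
    have hb: "real (hseq s0 N i) = B k i" using hk[of k] iL unfolding N_def by auto
    have "measure M (subint (tp, bt, lm) i) \<le> 1 / real (hseq s0 N i)"
      using p h1 by (simp add: pos_le_divide_eq mult.commute)
    then show "measure M (subint ((rauzy_step ^^ nsteps n a c k) (pi_top n, pi_bot n, lam)) i)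
        \<le> 1 / (\<Sum>r=1..n. thprod n (\<lambda>l. Theta n (a l) (c l)) 0 k r i)"
      using e hb unfolding st_def s0_def N_def B_def by simp
  qed
qed

end
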